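(* Let $\tau$ be a tau-function of the extended bigraded Toda hierarchy with wave operators $W,\bar W$. For a difference operator $a$ commuting with $L$ and a function $h(s,\mathbf t,\bar{\mathbf t},\mathbf x)$, say that $(a,h)$ satisfies the ASvM relations if $$-\frac{(a_-W)z^s}{Wz^s}=G(z)\frac h\tau-\frac h\tau,\qquad \frac{(a_+\bar W)z^s}{\bar Wz^s}=\bar G(z)\frac h\tau-\frac h\tau.$$ Then for every $n\ge1$ and $p\ge0$ the pairs $(L^{\frac nk},\partial_{t_n}\tau)$, $(L^{\frac nm},\partial_{\bar t_n}\tau)$, $(2L^p\log L,\partial_{x_p}\tau)$ and $(L^0,s\tau)$ satisfy the ASvM relations (here $\partial_{x_0}=\partial_s$ and $L^0=1$). Equivalently, the induced vector fields on tau-functions are $\partial_{t_n}$, $\partial_{\bar t_n}$, $\partial_{x_p}$ and multiplication by $x_0=s$, up to adding a function from $\mathcal F$.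
   Context: Let $s$ be a variable, $\Lambda$ the shift $(\Lambda f)(s)=f(s+1)$, $\mathcal A$ the space of formal difference operators $\sum_{i\in\mathbb Z}a_i(s)\Lambda^i$, $A_+=\sum_{i\ge0}a_i\Lambda^i$, $A_-=\sum_{i<0}a_i\Lambda^i$, products $(a(s)\Lambda^i)(b(s)\Lambda^j)=a(s)b(s+i)\Lambda^{i+j}$ where defined; operators act on $z^s$ by $(a(s)\Lambda^i\partial_s^j)z^s=a(s)z^i(\log z)^jz^s$. Fix $k,m\ge1$. Variables: $s=x_0$, $\mathbf x=(x_1,\dots)$, $\mathbf t=(t_1,\dots)$, $\bar{\mathbf t}=(\bar t_1,\dots)$, where $t_{nk}$ and $\bar t_{nm}$ are distinct variables. Let $[z]=(z,z^2/2,z^3/3,\dots)$; for a function $g(s,\mathbf t,\bar{\mathbf t},\mathbf x)$ put $G(z)g=g(s,\mathbf t-[z^{-1}],\bar{\mathbf t},\mathbf x)$, $\bar G(z)g=g(s+1,\mathbf t,\bar{\mathbf t}+[z],\mathbf x)$. A tau-function of the EBTH is a function $\tau(s,\mathbf t,\bar{\mathbf t},\mathbf x)$ such that, writing $G(z)\tau/\tau=1+\sum_{i\ge1}w_iz^{-i}$ and $\bar G(z)\tau/\tau=\sum_{i\ge0}\bar w_iz^i$, the wave operators $W=1+\sum_{i\ge1}w_i\Lambda^{-i}$, $\bar W=\sum_{i\ge0}\bar w_i\Lambda^i$ ($\bar w_0\ne0$) satisfy $W\Lambda^kW^{-1}=\bar W\Lambda^{-m}\bar W^{-1}=:L$, $L=\Lambda^k+u_{k-1}\Lambda^{k-1}+\dots+u_{-m}\Lambda^{-m}$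 ($u_{-m}\ne0$), and the EBTH flows $\partial_{t_n}W=-(L^{\frac nk})_-W$, $\partial_{t_n}\bar W=(L^{\frac nk})_+\bar W$, $\partial_{\bar t_n}W=-(L^{\frac nm})_-W$, $\partial_{\bar t_n}\bar W=(L^{\frac nm})_+\bar W$ ($n\ge1$), $\partial_{x_n}W=-(2L^n\log L)_-W$, $\partial_{x_n}\bar W=(2L^n\log L)_+\bar W$ ($n\ge0$). Here for $n\in\mathbb Z$, $L^{\frac nk}:=W\Lambda^nW^{-1}$, $L^{\frac nm}:=\bar W\Lambda^{-n}\bar W^{-1}$, and $\log L=\frac12W\partial_sW^{-1}-\frac12\bar W\partial_s\bar W^{-1}$. $\mathcal F$ is the space of functions $f(s,\mathbf x)$ with $f(s+1,\mathbf x)=f(s,\mathbf x)$. *)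

theory Defs
  imports "HOL-Analysis.Analysis"
begin

text \<open>Independent variables: s = x_0, t_n, tbar_n, x_n (n >= 1).  The constructors
  T 0, Tb 0, X 0 are unused dummy variables.\<close>
datatype var = S | T nat | Tb nat | X nat

type_synonym pt = "var \<Rightarrow> real"
type_synonym fn = "pt \<Rightarrow> complex"

definition xv :: "nat \<Rightarrow> var" where
  "xv p = (if p = 0 then S else X p)"

definition pd :: "var \<Rightarrow> fn \<Rightarrow> fn" where
  "pd v f = (\<lambda>p. vector_derivative (\<lambda>y. f (p(v := y))) (at (p v)))"

definition iterpd :: "var list \<Rightarrow> fn \<Rightarrow> fn" where
  "iterpd vs f = foldr pd vs f"

definition smooth_fn :: "fn \<Rightarrow> bool" where
  "smooth_fn f \<longleftrightarrow> (\<forall>vs.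
      (\<forall>v p. (\<lambda>y. iterpd vs f (p(v := y))) differentiable (at (p v))) \<and>
      (\<forall>v w. pd v (pd w (iterpd vs f)) = pd w (pd v (iterpd vs f))))"

definition shiftp :: "int \<Rightarrow> pt \<Rightarrow> pt" where
  "shiftp i p = p(S := p S + of_int i)"

definition MI :: "nat \<Rightarrow> (nat \<Rightarrow> nat) set" where
  "MI j = {m. (\<forall>i. m i \<noteq> 0 \<longrightarrow> 1 \<le> i \<and> i \<le> j) \<and> (\<Sum>i=1..j. i * m i) = j}"

fun dmi :: "(nat \<Rightarrow> var) \<Rightarrow> (nat \<Rightarrow> nat) \<Rightarrow> nat \<Rightarrow> fn \<Rightarrow> fn" where
  "dmi v m 0 g = g"
| "dmi v m (Suc i) g = (pd (v (Suc i)) ^^ m (Suc i)) (dmi v m i g)"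

text \<open>coefficient of z^{-j} in G(z)g = g(s, t - [z^{-1}], tbar, x) (Taylor expansion)\<close>
definition Gc :: "nat \<Rightarrow> fn \<Rightarrow> fn" where
  "Gc j g = (\<lambda>p. \<Sum>m\<in>MI j.
      (\<Prod>i=1..j. (complex_of_real (- 1 / real i)) ^ (m i) / fact (m i)) * dmi T m j g p)"

text \<open>coefficient of z^{j} in Gbar(z)g = g(s+1, t, tbar + [z], x)\<close>
definition Gbc :: "nat \<Rightarrow> fn \<Rightarrow> fn" where
  "Gbc j g = (\<lambda>p. \<Sum>m\<in>MI j.
      (\<Prod>i=1..j. (complex_of_real (1 / real i)) ^ (m i) / fact (m i)) * dmi Tb m j g (shiftp 1 p))"

section \<open>Formal difference operators  sum_i a_i(s) Lambda^i\<close>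

type_synonym dop = "int \<Rightarrow> fn"

text \<open>product (a Lambda^i)(b Lambda^j) = a(s) b(s+i) Lambda^{i+j}; the sum is the
  (finite, where the product is defined) sum over contributing terms\<close>
definition dmul :: "dop \<Rightarrow> dop \<Rightarrow> dop" (infixl "**" 70) where
  "A ** B = (\<lambda>k p. \<Sum>i\<in>{i. A i \<noteq> (\<lambda>_. 0) \<and> B (k - i) \<noteq> (\<lambda>_. 0)}.
                      A i p * B (k - i) (shiftp i p))"

definition lam :: "int \<Rightarrow> dop" where
  "lam n = (\<lambda>i p. if i = n then 1 else 0)"

definition dadd :: "dop \<Rightarrow> dop \<Rightarrow> dop" where
  "dadd A B = (\<lambda>i p. A i p + B i p)"

definition dsmul :: "complex \<Rightarrow> dop \<Rightarrow> dop" where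
  "dsmul c A = (\<lambda>i p. c * A i p)"

definition dplus :: "dop \<Rightarrow> dop" where
  "dplus A = (\<lambda>i. if i \<ge> 0 then A i else (\<lambda>_. 0))"

definition dminus :: "dop \<Rightarrow> dop" where
  "dminus A = (\<lambda>i. if i < 0 then A i else (\<lambda>_. 0))"

definition dpd :: "var \<Rightarrow> dop \<Rightarrow> dop" where
  "dpd v A = (\<lambda>i. pd v (A i))"

definition dpow :: "dop \<Rightarrow> nat \<Rightarrow> dop" where
  "dpow A n = ((\<lambda>B. A ** B) ^^ n) (lam 0)"

definition inv_neg :: "dop \<Rightarrow> dop" where
  "inv_neg W = (THE V. (\<forall>i>0. V i = (\<lambda>_. 0)) \<and> W ** V = lam 0 \<and> V ** W = lam 0)"

definition inv_pos :: "dop \<Rightarrow> dop" where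
  "inv_pos W = (THE V. (\<forall>i<0. V i = (\<lambda>_. 0)) \<and> W ** V = lam 0 \<and> V ** W = lam 0)"

definition Wop :: "fn \<Rightarrow> dop" where
  "Wop \<tau> = (\<lambda>i p. if i \<le> 0 then Gc (nat (- i)) \<tau> p / \<tau> p else 0)"

definition Wbop :: "fn \<Rightarrow> dop" where
  "Wbop \<tau> = (\<lambda>i p. if i \<ge> 0 then Gbc (nat i) \<tau> p / \<tau> p else 0)"

text \<open>L^{n/k} := W Lambda^n W^{-1}\<close>
definition Lk :: "fn \<Rightarrow> int \<Rightarrow> dop" where
  "Lk \<tau> n = (Wop \<tau> ** lam n) ** inv_neg (Wop \<tau>)"

text \<open>L^{n/m} := Wbar Lambda^{-n} Wbar^{-1}\<close>
definition Lm :: "fn \<Rightarrow> int \<Rightarrow> dop" where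
  "Lm \<tau> n = (Wbop \<tau> ** lam (- n)) ** inv_pos (Wbop \<tau>)"

definition Lax :: "nat \<Rightarrow> fn \<Rightarrow> dop" where
  "Lax k \<tau> = Lk \<tau> (int k)"

text \<open>log L = 1/2 W d_s W^{-1} - 1/2 Wbar d_s Wbar^{-1}; using
  W d_s W^{-1} = d_s + W (d_s W^{-1}) (coefficient-wise derivative), the d_s terms cancel\<close>
definition logL :: "fn \<Rightarrow> dop" where
  "logL \<tau> = dadd (dsmul (1/2) (Wop \<tau> ** dpd S (inv_neg (Wop \<tau>))))
                 (dsmul (- 1/2) (Wbop \<tau> ** dpd S (inv_pos (Wbop \<tau>))))"

definition tau_fn :: "nat \<Rightarrow> nat \<Rightarrow> fn \<Rightarrow> bool" where
  "tau_fn k m \<tau> \<longleftrightarrow>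
     smooth_fn \<tau> \<and> (\<forall>p. \<tau> p \<noteq> 0) \<and> Wbop \<tau> 0 \<noteq> (\<lambda>_. 0) \<and>
     Lax k \<tau> = Lm \<tau> (int m) \<and>
     (\<forall>i. (i > int k \<or> i < - int m) \<longrightarrow> Lax k \<tau> i = (\<lambda>_. 0)) \<and>
     Lax k \<tau> (int k) = (\<lambda>_. 1) \<and> Lax k \<tau> (- int m) \<noteq> (\<lambda>_. 0) \<and>
     (\<forall>n\<ge>1. dpd (T n) (Wop \<tau>) = dsmul (-1) (dminus (Lk \<tau> (int n)) ** Wop \<tau>) \<and>
             dpd (T n) (Wbop \<tau>) = dplus (Lk \<tau> (int n)) ** Wbop \<tau>) \<and>
     (\<forall>n\<ge>1. dpd (Tb n) (Wop \<tau>) = dsmul (-1) (dminus (Lm \<tau> (int n)) ** Wop \<tau>) \<and>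
             dpd (Tb n) (Wbop \<tau>) = dplus (Lm \<tau> (int n)) ** Wbop \<tau>) \<and>
     (\<forall>n. dpd (xv n) (Wop \<tau>) =
              dsmul (-1) (dminus (dsmul 2 (dpow (Lax k \<tau>) n ** logL \<tau>)) ** Wop \<tau>) \<and>
           dpd (xv n) (Wbop \<tau>) =
              dplus (dsmul 2 (dpow (Lax k \<tau>) n ** logL \<tau>)) ** Wbop \<tau>)"

text \<open>quotient of formal power series (in one formal variable) with function coefficients\<close>
definition sdiv :: "(nat \<Rightarrow> fn) \<Rightarrow> (nat \<Rightarrow> fn) \<Rightarrow> nat \<Rightarrow> fn" where
  "sdiv num den = (THE q. \<forall>j p. num j p = (\<Sum>i\<le>j. q i p * den (j - i) p))"

text \<open>(a,h) satisfies the ASvM relations (for a commuting with L):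
  -(a_- W) z^s / (W z^s) = G(z)(h/tau) - h/tau   (series in z^{-1}) and
  (a_+ Wbar) z^s / (Wbar z^s) = Gbar(z)(h/tau) - h/tau   (series in z).\<close>
definition ASvM :: "nat \<Rightarrow> fn \<Rightarrow> dop \<Rightarrow> fn \<Rightarrow> bool" where
  "ASvM k \<tau> a h \<longleftrightarrow>
     a ** Lax k \<tau> = Lax k \<tau> ** a \<and>
     (\<forall>j. sdiv (\<lambda>j p. - (dminus a ** Wop \<tau>) (- int j) p) (\<lambda>j. Wop \<tau> (- int j)) j
          = (\<lambda>p. Gc j (\<lambda>q. h q / \<tau> q) p - (if j = 0 then h p / \<tau> p else 0))) \<and>
     (\<forall>j. sdiv (\<lambda>j. (dplus a ** Wbop \<tau>) (int j)) (\<lambda>j. Wbop \<tau> (int j)) j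
          = (\<lambda>p. Gbc j (\<lambda>q. h q / \<tau> q) p - (if j = 0 then h p / \<tau> p else 0)))"

end

theory Submission
  imports Defs
begin

no_notation matrix_matrix_mult (infixl "**" 70)


definition HD :: "var \<Rightarrow> fn \<Rightarrow> fn \<Rightarrow> bool" where
  "HD v f g \<longleftrightarrow> (\<forall>p. ((\<lambda>y. f (p(v:=y))) has_vector_derivative g p) (at (p v)))"

lemma HD_pd: "HD v f g \<Longrightarrow> pd v f = g"
  unfolding HD_def pd_def by (auto intro!: ext vector_derivative_at)

lemma HD_line: "HD v f g \<Longrightarrow> ((\<lambda>y. f (p(v:=y))) has_vector_derivative g (p(v:=y0))) (at y0)"
  unfolding HD_def by (drule spec[of _ "p(v:=y0)"]) simp

lemma HD_diff: "HD v f g \<Longrightarrow> (\<lambda>y. f (p(v:=y))) differentiable at (p v)"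
  unfolding HD_def by (auto intro: differentiableI_vector)

lemma D_HD: "(\<And>p. (\<lambda>y. f (p(v:=y))) differentiable at (p v)) \<Longrightarrow> HD v f (pd v f)"
  unfolding HD_def pd_def using vector_derivative_works by auto

lemma HD_add: "HD v f f' \<Longrightarrow> HD v g g' \<Longrightarrow> HD v (\<lambda>p. f p + g p) (\<lambda>p. f' p + g' p)"
  unfolding HD_def by (auto intro!: derivative_intros)

lemma HD_diffe: "HD v f f' \<Longrightarrow> HD v g g' \<Longrightarrow> HD v (\<lambda>p. f p - g p) (\<lambda>p. f' p - g' p)"
  unfolding HD_def by (auto intro!: derivative_intros)

lemma HD_minus: "HD v f f' \<Longrightarrow> HD v (\<lambda>p. - f p) (\<lambda>p. - f' p)"
  unfolding HD_def by (auto intro!: derivative_intros)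

lemma HD_mult: "HD v f f' \<Longrightarrow> HD v g g' \<Longrightarrow> HD v (\<lambda>p. f p * g p) (\<lambda>p. f' p * g p + f p * g' p)"
  unfolding HD_def
proof (intro allI)
  fix p assume a: "\<forall>p. ((\<lambda>y. f (p(v := y))) has_vector_derivative f' p) (at (p v))"
     "\<forall>p. ((\<lambda>y. g (p(v := y))) has_vector_derivative g' p) (at (p v))"
  show "((\<lambda>y. f (p(v := y)) * g (p(v := y))) has_vector_derivative f' p * g p + f p * g' p) (at (p v))"
    using has_vector_derivative_mult[OF a(1)[rule_format, of p] a(2)[rule_format, of p]]
    by (simp add: algebra_simps)
qed

lemma HD_const: "HD v (\<lambda>p. c) (\<lambda>p. 0)"
  unfolding HD_def by auto

lemma HD_cmult: "HD v f f' \<Longrightarrow> HD v (\<lambda>p. c * f p) (\<lambda>p. c * f' p)"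
  unfolding HD_def by (auto intro!: derivative_intros)

lemma HD_sum: "(\<And>i. i \<in> I \<Longrightarrow> HD v (f i) (f' i)) \<Longrightarrow> HD v (\<lambda>p. \<Sum>i\<in>I. f i p) (\<lambda>p. \<Sum>i\<in>I. f' i p)"
  unfolding HD_def by (auto intro!: has_vector_derivative_sum)

lemma HD_inverse: "HD v f f' \<Longrightarrow> (\<And>p. f p \<noteq> 0) \<Longrightarrow>
   HD v (\<lambda>p. inverse (f p)) (\<lambda>p. - f' p * (inverse (f p) * inverse (f p)))"
  unfolding HD_def
proof (intro allI)
  fix p assume a: "\<forall>p. ((\<lambda>y. f (p(v := y))) has_vector_derivative f' p) (at (p v))" and nz: "\<And>p. f p \<noteq> 0"
  have "((inverse \<circ> (\<lambda>y. f (p(v := y)))) has_vector_derivative (f' p * (- (inverse (f p) * inverse (f p))))) (at (p v))"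
    apply (rule field_vector_diff_chain_at[OF a[rule_format, of p]])
    using DERIV_inverse[of "f p"] nz[of p] by (simp add: power2_eq_square)
  then show "((\<lambda>y. inverse (f (p(v := y)))) has_vector_derivative - f' p * (inverse (f p) * inverse (f p))) (at (p v))"
    by (simp add: o_def)
qed

lemma shiftp_upd: "v \<noteq> S \<Longrightarrow> shiftp i (p(v:=y)) = (shiftp i p)(v:=y)"
  unfolding shiftp_def by (auto simp: fun_upd_twist)

lemma shiftp_updS: "shiftp i (p(S:=y)) = (shiftp i p)(S:=y + of_int i)"
  unfolding shiftp_def by auto

lemma shiftp_S[simp]: "shiftp i p S = p S + of_int i"
  unfolding shiftp_def by auto

lemma shiftp_add: "shiftp i (shiftp j p) = shiftp (i+j) p"
  unfolding shiftp_def by auto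

lemma shiftp_0[simp]: "shiftp 0 p = p"
  unfolding shiftp_def by auto

lemma HD_shift: "HD v f f' \<Longrightarrow> HD v (\<lambda>p. f (shiftp i p)) (\<lambda>p. f' (shiftp i p))"
proof (cases "v = S")
  case False
  assume h: "HD v f f'"
  show ?thesis unfolding HD_def
  proof
    fix p
    have "shiftp i p v = p v" using False unfolding shiftp_def by auto
    then show "((\<lambda>y. f (shiftp i (p(v := y)))) has_vector_derivative f' (shiftp i p)) (at (p v))"
      using h[unfolded HD_def, rule_format, of "shiftp i p"] False by (simp add: shiftp_upd)
  qed
next
  case True
  assume h: "HD v f f'"
  show ?thesis unfolding HD_def
  proof
    fix p
    have 1: "((\<lambda>y. y + of_int i) has_vector_derivative 1) (at (p S))"
      by (auto intro!: derivative_eq_intros)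
    have 2: "((\<lambda>y. f ((shiftp i p)(S:=y))) has_vector_derivative f' ((shiftp i p)(S:=p S + of_int i))) (at (p S + of_int i))"
      using HD_line[OF h[unfolded True], of "shiftp i p" "p S + of_int i"] by simp
    have "(((\<lambda>y. f ((shiftp i p)(S:=y))) \<circ> (\<lambda>y. y + of_int i)) has_vector_derivative (1::real) *\<^sub>R f' ((shiftp i p)(S:=p S + of_int i))) (at (p S))"
      by (rule vector_diff_chain_at[OF 1]) (use 2 in simp)
    moreover have "(shiftp i p)(S:=p S + of_int i) = shiftp i p" unfolding shiftp_def by auto
    ultimately show "((\<lambda>y. f (shiftp i (p(v := y)))) has_vector_derivative f' (shiftp i p)) (at (p v))"
      using True by (simp add: o_def shiftp_updS)
  qed
qed


inductive_set Alg :: "fn set" where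
  Alg_smooth: "smooth_fn f \<Longrightarrow> f \<in> Alg"
| Alg_const: "(\<lambda>p. c) \<in> Alg"
| Alg_inv: "smooth_fn g \<Longrightarrow> (\<forall>p. g p \<noteq> 0) \<Longrightarrow> (\<lambda>p. inverse (g p)) \<in> Alg"
| Alg_add: "f \<in> Alg \<Longrightarrow> g \<in> Alg \<Longrightarrow> (\<lambda>p. f p + g p) \<in> Alg"
| Alg_mult: "f \<in> Alg \<Longrightarrow> g \<in> Alg \<Longrightarrow> (\<lambda>p. f p * g p) \<in> Alg"

lemma iterpd_Cons: "iterpd (v # vs) f = pd v (iterpd vs f)"
  unfolding iterpd_def by simp

lemma iterpd_snoc: "iterpd (vs @ [v]) f = iterpd vs (pd v f)"
  unfolding iterpd_def by simp

lemma smooth_pd: "smooth_fn f \<Longrightarrow> smooth_fn (pd v f)"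
  unfolding smooth_fn_def
proof (intro allI)
  fix vs assume "\<forall>vs. (\<forall>va p. (\<lambda>y. iterpd vs f (p(va := y))) differentiable at (p va)) \<and>
          (\<forall>va w. pd va (pd w (iterpd vs f)) = pd w (pd va (iterpd vs f)))"
  from this[rule_format, of "vs @ [v]"] show "(\<forall>va p. (\<lambda>y. iterpd vs (pd v f) (p(va := y))) differentiable at (p va)) \<and>
          (\<forall>va w. pd va (pd w (iterpd vs (pd v f))) = pd w (pd va (iterpd vs (pd v f))))"
    unfolding iterpd_snoc .
qed

lemma smooth_HD: "smooth_fn f \<Longrightarrow> HD v f (pd v f)"
  unfolding smooth_fn_def by (rule D_HD) (drule spec[of _ "[]"], simp add: iterpd_def)

lemma smooth_comm: "smooth_fn f \<Longrightarrow> pd v (pd w f) = pd w (pd v f)"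
  unfolding smooth_fn_def by (drule spec[of _ "[]"], simp add: iterpd_def)

lemma Alg_HD: "f \<in> Alg \<Longrightarrow> HD v f (pd v f) \<and> pd v f \<in> Alg"
proof (induction f arbitrary: v rule: Alg.induct)
  case (Alg_smooth f)
  then show ?case by (simp add: smooth_HD smooth_pd Alg.Alg_smooth)
next
  case (Alg_const c)
  then show ?case using HD_const[of v c] HD_pd[OF HD_const[of v c]] by (simp add: Alg.Alg_const)
next
  case (Alg_inv g)
  have h: "HD v (\<lambda>p. inverse (g p)) (\<lambda>p. - pd v g p * (inverse (g p) * inverse (g p)))"
    using HD_inverse[OF smooth_HD[OF Alg_inv(1)]] Alg_inv(2) by auto
  have "(\<lambda>p. - pd v g p * (inverse (g p) * inverse (g p))) = (\<lambda>p. ((\<lambda>p. -1) p * pd v g p) * ((\<lambda>p. inverse (g p)) p * (\<lambda>p. inverse (g p)) p))"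
    by auto
  also have "\<dots> \<in> Alg"
    by (intro Alg.Alg_mult Alg.Alg_const Alg.Alg_smooth smooth_pd Alg.Alg_inv Alg_inv)
  finally show ?case using h HD_pd[OF h] by simp
next
  case (Alg_add f g)
  have h: "HD v (\<lambda>p. f p + g p) (\<lambda>p. pd v f p + pd v g p)"
    using Alg_add.IH by (intro HD_add) auto
  then show ?case using HD_pd[OF h] Alg_add.IH by (auto intro!: Alg.Alg_add)
next
  case (Alg_mult f g)
  have h: "HD v (\<lambda>p. f p * g p) (\<lambda>p. pd v f p * g p + f p * pd v g p)"
    using Alg_mult.IH by (intro HD_mult) auto
  then show ?case using HD_pd[OF h] Alg_mult by (auto intro!: Alg.Alg_add Alg.Alg_mult)
qed

lemma Alg_pd: "f \<in> Alg \<Longrightarrow> pd v f \<in> Alg" using Alg_HD by blast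
lemma Alg_HD': "f \<in> Alg \<Longrightarrow> HD v f (pd v f)" using Alg_HD by blast

lemma pd_add: "f \<in> Alg \<Longrightarrow> g \<in> Alg \<Longrightarrow> pd v (\<lambda>p. f p + g p) = (\<lambda>p. pd v f p + pd v g p)"
  by (intro HD_pd HD_add Alg_HD')
lemma pd_mult: "f \<in> Alg \<Longrightarrow> g \<in> Alg \<Longrightarrow> pd v (\<lambda>p. f p * g p) = (\<lambda>p. pd v f p * g p + f p * pd v g p)"
  by (intro HD_pd HD_mult Alg_HD')
lemma pd_cmult: "f \<in> Alg \<Longrightarrow> pd v (\<lambda>p. c * f p) = (\<lambda>p. c * pd v f p)"
  by (intro HD_pd HD_cmult Alg_HD')
lemma pd_const: "pd v (\<lambda>p. c) = (\<lambda>p. 0)"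
  by (intro HD_pd HD_const)
lemma pd_sum: "(\<And>i. i \<in> I \<Longrightarrow> f i \<in> Alg) \<Longrightarrow> pd v (\<lambda>p. \<Sum>i\<in>I. f i p) = (\<lambda>p. \<Sum>i\<in>I. pd v (f i) p)"
  by (intro HD_pd HD_sum Alg_HD') auto
lemma pd_diff: "f \<in> Alg \<Longrightarrow> g \<in> Alg \<Longrightarrow> pd v (\<lambda>p. f p - g p) = (\<lambda>p. pd v f p - pd v g p)"
  by (intro HD_pd HD_diffe Alg_HD')
lemma pd_shift: "f \<in> Alg \<Longrightarrow> pd v (\<lambda>p. f (shiftp i p)) = (\<lambda>p. pd v f (shiftp i p))"
  by (intro HD_pd HD_shift Alg_HD')

lemma Alg_cmult: "f \<in> Alg \<Longrightarrow> (\<lambda>p. c * f p) \<in> Alg"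
  using Alg_mult[OF Alg_const] by blast
lemma Alg_minus: "f \<in> Alg \<Longrightarrow> (\<lambda>p. - f p) \<in> Alg"
  using Alg_cmult[of f "-1"] by simp
lemma Alg_diff: "f \<in> Alg \<Longrightarrow> g \<in> Alg \<Longrightarrow> (\<lambda>p. f p - g p) \<in> Alg"
proof -
  assume a: "f \<in> Alg" "g \<in> Alg"
  have "(\<lambda>p. f p + (\<lambda>p. - g p) p) \<in> Alg" by (rule Alg_add[OF a(1) Alg_minus[OF a(2)]])
  then show ?thesis by simp
qed
lemma Alg_sum: "(\<And>i. i \<in> I \<Longrightarrow> f i \<in> Alg) \<Longrightarrow> (\<lambda>p. \<Sum>i\<in>I. f i p) \<in> Alg"
proof (induction I rule: infinite_finite_induct)
  case (infinite A) then show ?case using Alg_const[of 0] by simp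
next
  case empty then show ?case using Alg_const[of 0] by simp
next
  case (insert x F)
  have "(\<lambda>p. f x p + (\<lambda>p. \<Sum>i\<in>F. f i p) p) \<in> Alg"
    by (rule Alg_add) (use insert in auto)
  then show ?case using insert(1,2) by (simp add: sum.insert)
qed

lemma pd_inv_eq: "smooth_fn g \<Longrightarrow> (\<forall>p. g p \<noteq> 0) \<Longrightarrow>
   pd u (\<lambda>p. inverse (g p)) = (\<lambda>p. - pd u g p * (inverse (g p) * inverse (g p)))"
  using HD_pd[OF HD_inverse[OF smooth_HD]] by auto

lemma pd_pd_inv: assumes g: "smooth_fn g" "\<forall>p. g p \<noteq> 0"
  shows "pd v (pd w (\<lambda>p. inverse (g p))) = (\<lambda>p. - pd v (pd w g) p * (inverse (g p) * inverse (g p))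
      + 2 * (pd w g p * pd v g p) * (inverse (g p) * inverse (g p) * inverse (g p)))"
proof -
  have gA: "g \<in> Alg" using g(1) by (rule Alg.Alg_smooth)
  have ig: "(\<lambda>p. inverse (g p)) \<in> Alg" using g by (rule Alg.Alg_inv)
  have m: "(\<lambda>p. - pd w g p) \<in> Alg" by (intro Alg_minus Alg_pd gA)
  have sq: "(\<lambda>p. inverse (g p) * inverse (g p)) \<in> Alg" by (intro Alg.Alg_mult ig)
  have 1: "pd v (\<lambda>p. - pd w g p) = (\<lambda>p. - pd v (pd w g) p)"
    by (intro HD_pd HD_minus Alg_HD' Alg_pd gA)
  have 2: "pd v (\<lambda>p. inverse (g p) * inverse (g p)) = (\<lambda>p. pd v (\<lambda>p. inverse (g p)) p * inverse (g p) + inverse (g p) * pd v (\<lambda>p. inverse (g p)) p)"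
    by (rule pd_mult[OF ig ig])
  have "pd v (pd w (\<lambda>p. inverse (g p))) = pd v (\<lambda>p. (- pd w g p) * (inverse (g p) * inverse (g p)))"
    using pd_inv_eq[OF g] by simp
  also have "\<dots> = (\<lambda>p. pd v (\<lambda>p. - pd w g p) p * (inverse (g p) * inverse (g p)) + (- pd w g p) * pd v (\<lambda>p. inverse (g p) * inverse (g p)) p)"
    by (rule pd_mult[OF m sq])
  also have "\<dots> = (\<lambda>p. - pd v (pd w g) p * (inverse (g p) * inverse (g p))
      + 2 * (pd w g p * pd v g p) * (inverse (g p) * inverse (g p) * inverse (g p)))"
    unfolding 1 2 pd_inv_eq[OF g] by (rule ext) algebra
  finally show ?thesis .
qed

lemma Alg_comm: "f \<in> Alg \<Longrightarrow> pd v (pd w f) = pd w (pd v f)"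
proof (induction f rule: Alg.induct)
  case (Alg_smooth f)
  then show ?case by (rule smooth_comm)
next
  case (Alg_const c)
  then show ?case by (simp add: pd_const)
next
  case (Alg_inv g)
  show ?case unfolding pd_pd_inv[OF Alg_inv] using smooth_comm[OF Alg_inv(1), of v w]
    by (simp add: mult.commute)
next
  case (Alg_add f g)
  have "pd v (pd w (\<lambda>p. f p + g p)) = (\<lambda>p. pd v (pd w f) p + pd v (pd w g) p)"
    unfolding pd_add[OF Alg_add.hyps] by (rule pd_add[OF Alg_pd Alg_pd]) (use Alg_add in auto)
  moreover have "pd w (pd v (\<lambda>p. f p + g p)) = (\<lambda>p. pd w (pd v f) p + pd w (pd v g) p)"
    unfolding pd_add[OF Alg_add.hyps] by (rule pd_add[OF Alg_pd Alg_pd]) (use Alg_add in auto)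
  ultimately show ?case using Alg_add.IH by simp
next
  case (Alg_mult f g)
  have fv: "pd v f \<in> Alg" "pd w f \<in> Alg" "pd v g \<in> Alg" "pd w g \<in> Alg" using Alg_mult.hyps Alg_pd by auto
  have e: "pd a (pd b (\<lambda>p. f p * g p)) = (\<lambda>p. (pd a (pd b f) p * g p + pd b f p * pd a g p) + (pd a f p * pd b g p + f p * pd a (pd b g) p))"
    if "a \<in> {v,w}" "b \<in> {v,w}" for a b
  proof -
    have A: "pd b f \<in> Alg" "pd b g \<in> Alg" using Alg_mult.hyps Alg_pd by auto
    show ?thesis
      unfolding pd_mult[OF Alg_mult.hyps]
      by (simp only: pd_add[OF Alg.Alg_mult[OF A(1) Alg_mult.hyps(2)] Alg.Alg_mult[OF Alg_mult.hyps(1) A(2)]]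
          pd_mult[OF A(1) Alg_mult.hyps(2)] pd_mult[OF Alg_mult.hyps(1) A(2)])
  qed
  have e1: "pd v (pd w (\<lambda>p. f p * g p)) = (\<lambda>p. (pd v (pd w f) p * g p + pd w f p * pd v g p) + (pd v f p * pd w g p + f p * pd v (pd w g) p))"
    by (rule e) auto
  have e2: "pd w (pd v (\<lambda>p. f p * g p)) = (\<lambda>p. (pd w (pd v f) p * g p + pd v f p * pd w g p) + (pd w f p * pd v g p + f p * pd w (pd v g) p))"
    by (rule e) auto
  show ?case unfolding e1 e2 Alg_mult.IH by (rule ext) (simp only: add.commute add.left_commute add.assoc)
qed

lemma Alg_smooth_iff: "f \<in> Alg \<longleftrightarrow> smooth_fn f"
proof
  assume f: "f \<in> Alg"
  have "iterpd vs f \<in> Alg" for vs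
    by (induction vs) (simp_all add: f Alg_pd iterpd_def)
  then show "smooth_fn f" unfolding smooth_fn_def
    using HD_diff[OF Alg_HD'] Alg_comm by blast
qed (rule Alg_smooth)


lemma pdpow_Alg: "h \<in> Alg \<Longrightarrow> (pd w ^^ n) h \<in> Alg"
  by (induction n) (auto intro: Alg_pd)

lemma pdpow_cmult: "h \<in> Alg \<Longrightarrow> (pd w ^^ n) (\<lambda>p. c * h p) = (\<lambda>p. c * (pd w ^^ n) h p)"
proof (induction n)
  case (Suc n)
  then show ?case using pd_cmult[OF pdpow_Alg[OF Suc.prems]] by simp
qed simp

lemma pdpow_sum: "(\<And>a. a \<in> A \<Longrightarrow> H a \<in> Alg) \<Longrightarrow> (pd w ^^ n) (\<lambda>p. \<Sum>a\<in>A. H a p) = (\<lambda>p. \<Sum>a\<in>A. (pd w ^^ n) (H a) p)"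
proof (induction n)
  case (Suc n)
  have "(pd w ^^ Suc n) (\<lambda>p. \<Sum>a\<in>A. H a p) = pd w (\<lambda>p. \<Sum>a\<in>A. (pd w ^^ n) (H a) p)"
    using Suc by simp
  also have "\<dots> = (\<lambda>p. \<Sum>a\<in>A. pd w ((pd w ^^ n) (H a)) p)"
    by (rule pd_sum) (use Suc.prems pdpow_Alg in auto)
  finally show ?case by simp
qed simp

lemma pdpow_comm: "h \<in> Alg \<Longrightarrow> pd u ((pd w ^^ n) h) = (pd w ^^ n) (pd u h)"
proof (induction n)
  case (Suc n)
  then show ?case using Alg_comm[OF pdpow_Alg[OF Suc.prems], of u w] by simp
qed simp

lemma pdpow_zero: "(pd w ^^ n) (\<lambda>p. 0) = (\<lambda>p. 0)"
  by (induction n) (auto simp: pd_const)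

definition Ed :: "var \<Rightarrow> nat \<Rightarrow> fn \<Rightarrow> fn" where
  "Ed w n h = (\<lambda>p. (pd w ^^ n) h p / fact n)"

lemma Ed_Alg: "h \<in> Alg \<Longrightarrow> Ed w n h \<in> Alg"
  unfolding Ed_def using Alg_cmult[OF pdpow_Alg[where h=h and w=w and n=n], where c="inverse (fact n)"]
  by (simp add: field_simps)

lemma Ed_0[simp]: "Ed w 0 h = h"
  unfolding Ed_def by simp

lemma pd_Ed: "h \<in> Alg \<Longrightarrow> pd w (Ed w n h) = (\<lambda>p. of_nat (Suc n) * Ed w (Suc n) h p)"
proof -
  assume h: "h \<in> Alg"
  have "pd w (Ed w n h) = pd w (\<lambda>p. inverse (fact n) * (pd w ^^ n) h p)"
    unfolding Ed_def by (simp add: field_simps)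
  also have "\<dots> = (\<lambda>p. inverse (fact n) * (pd w ^^ Suc n) h p)"
    using pd_cmult[OF pdpow_Alg[OF h]] by simp
  also have "\<dots> = (\<lambda>p. of_nat (Suc n) * Ed w (Suc n) h p)"
    unfolding Ed_def by (rule ext) (simp add: field_simps fact_Suc del: of_nat_Suc)
  finally show ?thesis .
qed

lemma conv_step:
  fixes X Y :: "nat \<Rightarrow> complex"
  shows "(\<Sum>r\<le>n. of_nat (Suc r) * X (Suc r) * Y (n - r) + X r * (of_nat (Suc (n - r)) * Y (Suc (n - r))))
       = of_nat (Suc n) * (\<Sum>r\<le>Suc n. X r * Y (Suc n - r))"
proof -
  have 1: "(\<Sum>r\<le>n. of_nat (Suc r) * X (Suc r) * Y (n - r)) = (\<Sum>r\<le>Suc n. of_nat r * X r * Y (Suc n - r))"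
    by (subst sum.atMost_Suc_shift) simp
  have 2: "(\<Sum>r\<le>n. X r * (of_nat (Suc (n - r)) * Y (Suc (n - r)))) = (\<Sum>r\<le>Suc n. of_nat (Suc n - r) * X r * Y (Suc n - r))"
  proof -
    have "(\<Sum>r\<le>n. X r * (of_nat (Suc (n - r)) * Y (Suc (n - r)))) = (\<Sum>r\<le>n. of_nat (Suc n - r) * X r * Y (Suc n - r))"
      by (intro sum.cong refl) (metis Suc_diff_le atMost_iff mult.commute mult.left_commute)
    then show ?thesis by simp
  qed
  have 3: "(\<Sum>r\<le>Suc n. of_nat r * X r * Y (Suc n - r)) + (\<Sum>r\<le>Suc n. of_nat (Suc n - r) * X r * Y (Suc n - r))
     = (\<Sum>r\<le>Suc n. of_nat (Suc n) * (X r * Y (Suc n - r)))"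
    unfolding sum.distrib[symmetric]
  proof (rule sum.cong)
    fix r assume "r \<in> {..Suc n}"
    then have "of_nat r + of_nat (Suc n - r) = (of_nat (Suc n) :: complex)"
      by (simp del: of_nat_Suc add: of_nat_add[symmetric])
    then show "of_nat r * X r * Y (Suc n - r) + of_nat (Suc n - r) * X r * Y (Suc n - r) = of_nat (Suc n) * (X r * Y (Suc n - r))"
      by (metis distrib_right mult.assoc)
  qed simp
  show ?thesis unfolding sum.distrib 1 2 3 sum_distrib_left ..
qed

lemma Ed_leibniz: "f \<in> Alg \<Longrightarrow> g \<in> Alg \<Longrightarrow>
   Ed w n (\<lambda>p. f p * g p) = (\<lambda>p. \<Sum>r\<le>n. Ed w r f p * Ed w (n - r) g p)"
proof (induction n)
  case 0
  then show ?case by simp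
next
  case (Suc n)
  have A: "\<And>r. Ed w r f \<in> Alg" "\<And>r. Ed w r g \<in> Alg" using Suc.prems Ed_Alg by auto
  have AA: "\<And>r. (\<lambda>p. Ed w r f p * Ed w (n - r) g p) \<in> Alg" using A Alg_mult by blast
  have fg: "(\<lambda>p. f p * g p) \<in> Alg" using Suc.prems Alg_mult by blast
  have "of_nat (Suc n) * Ed w (Suc n) (\<lambda>p. f p * g p) p = pd w (Ed w n (\<lambda>p. f p * g p)) p" for p
    using pd_Ed[OF fg] by simp
  also have "\<dots>p = pd w (\<lambda>p. \<Sum>r\<le>n. Ed w r f p * Ed w (n - r) g p) p" for p using Suc by simp
  also have "\<dots>p = (\<Sum>r\<le>n. pd w (\<lambda>p. Ed w r f p * Ed w (n - r) g p) p)" for p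
    using pd_sum[of "{..n}" "\<lambda>r p. Ed w r f p * Ed w (n - r) g p", OF AA] by simp
  also have "\<dots>p = (\<Sum>r\<le>n. of_nat (Suc r) * Ed w (Suc r) f p * Ed w (n - r) g p
                  + Ed w r f p * (of_nat (Suc (n - r)) * Ed w (Suc (n - r)) g p))" for p
    unfolding pd_mult[OF A(1) A(2)] pd_Ed[OF Suc.prems(1)] pd_Ed[OF Suc.prems(2)] by simp
  also have "\<dots>p = of_nat (Suc n) * (\<Sum>r\<le>Suc n. Ed w r f p * Ed w (Suc n - r) g p)" for p
    by (rule conv_step)
  finally have "of_nat (Suc n) * Ed w (Suc n) (\<lambda>p. f p * g p) p = of_nat (Suc n) * (\<Sum>r\<le>Suc n. Ed w r f p * Ed w (Suc n - r) g p)" for p .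
  then show ?case by (intro ext) (simp only: mult_cancel_left of_nat_eq_0_iff nat.distinct simp_thms)
qed

definition Ew :: "complex \<Rightarrow> var \<Rightarrow> nat \<Rightarrow> fn \<Rightarrow> fn" where
  "Ew c w n h = (\<lambda>p. c ^ n * Ed w n h p)"

lemma Ew_Alg: "h \<in> Alg \<Longrightarrow> Ew c w n h \<in> Alg"
  unfolding Ew_def by (intro Alg_cmult Ed_Alg)

lemma Ew_0[simp]: "Ew c w 0 h = h"
  unfolding Ew_def by simp

lemma Ew_leibniz: "f \<in> Alg \<Longrightarrow> g \<in> Alg \<Longrightarrow>
   Ew c w n (\<lambda>p. f p * g p) = (\<lambda>p. \<Sum>r\<le>n. Ew c w r f p * Ew c w (n - r) g p)"
proof -
  assume fg: "f \<in> Alg" "g \<in> Alg"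
  have "c ^ n * (Ed w r f p * Ed w (n - r) g p) = c ^ r * Ed w r f p * (c ^ (n - r) * Ed w (n - r) g p)"
    if "r \<in> {..n}" for r p
  proof -
    have "c ^ n = c ^ r * c ^ (n - r)" using that by (simp add: power_add[symmetric])
    then show ?thesis by (simp only: mult_ac)
  qed
  then show ?thesis
    unfolding Ew_def Ed_leibniz[OF fg] sum_distrib_left by (intro ext sum.cong refl) simp
qed

lemma Ew_sum: assumes "(\<And>a. a \<in> A \<Longrightarrow> H a \<in> Alg)" shows "Ew c w n (\<lambda>p. \<Sum>a\<in>A. H a p) = (\<lambda>p. \<Sum>a\<in>A. Ew c w n (H a) p)"
proof -
  have e: "(pd w ^^ n) (\<lambda>p. \<Sum>a\<in>A. H a p) = (\<lambda>p. \<Sum>a\<in>A. (pd w ^^ n) (H a) p)"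
    by (rule pdpow_sum) (rule assms)
  show ?thesis unfolding Ew_def Ed_def e by (simp add: sum_distrib_left sum_divide_distrib)
qed

lemma Ew_comm: "h \<in> Alg \<Longrightarrow> pd u (Ew c w n h) = Ew c w n (pd u h)"
proof -
  assume h: "h \<in> Alg"
  have "Ew c w n h = (\<lambda>p. (c ^ n / fact n) * (pd w ^^ n) h p)"
    unfolding Ew_def Ed_def by simp
  moreover have "Ew c w n (pd u h) = (\<lambda>p. (c ^ n / fact n) * (pd w ^^ n) (pd u h) p)"
    unfolding Ew_def Ed_def by simp
  ultimately show ?thesis
    by (simp only:) (subst pd_cmult[OF pdpow_Alg[OF h]], simp only: pdpow_comm[OF h])
qed


definition Box :: "(nat \<Rightarrow> nat) \<Rightarrow> nat \<Rightarrow> (nat \<Rightarrow> nat) set" where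
  "Box m j = {a. \<forall>i. (1 \<le> i \<and> i \<le> j \<longrightarrow> a i \<le> m i) \<and> (\<not>(1 \<le> i \<and> i \<le> j) \<longrightarrow> a i = 0)}"

lemma finite_Box: "finite (Box m j)"
proof -
  have inj: "inj_on (\<lambda>a. restrict a {1..j}) (Box m j)"
  proof (rule inj_onI)
    fix a b assume a: "a \<in> Box m j" and b: "b \<in> Box m j" and e: "restrict a {1..j} = restrict b {1..j}"
    show "a = b"
    proof
      fix i show "a i = b i"
      proof (cases "1 \<le> i \<and> i \<le> j")
        case True then show ?thesis using fun_cong[OF e, of i] by simp
      next
        case False then show ?thesis using a b unfolding Box_def by auto
      qed
    qed
  qed
  have "(\<lambda>a. restrict a {1..j}) ` Box m j \<subseteq> (\<Pi>\<^sub>E i\<in>{1..j}. {..m i})"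
    unfolding Box_def by auto
  moreover have "finite (\<Pi>\<^sub>E i\<in>{1..j}. {..m i})" by (intro finite_PiE) auto
  ultimately have "finite ((\<lambda>a. restrict a {1..j}) ` Box m j)" by (rule finite_subset)
  then show ?thesis using finite_imageD[OF _ inj] by blast
qed

lemma Box_0: "Box m 0 = {\<lambda>i. 0}"
  unfolding Box_def by auto

fun dw :: "(nat \<Rightarrow> complex) \<Rightarrow> (nat \<Rightarrow> var) \<Rightarrow> (nat \<Rightarrow> nat) \<Rightarrow> nat \<Rightarrow> fn \<Rightarrow> fn" where
  "dw \<alpha> v m 0 g = g"
| "dw \<alpha> v m (Suc i) g = Ew (\<alpha> (Suc i)) (v (Suc i)) (m (Suc i)) (dw \<alpha> v m i g)"

lemma dw_Alg: "h \<in> Alg \<Longrightarrow> dw \<alpha> v m j h \<in> Alg"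
  by (induction j) (auto intro: Ew_Alg)

lemma dw_cong: "(\<And>i. 1 \<le> i \<Longrightarrow> i \<le> j \<Longrightarrow> m i = m' i) \<Longrightarrow> dw \<alpha> v m j h = dw \<alpha> v m' j h"
  by (induction j) auto

lemma dw_ext: "i \<le> j \<Longrightarrow> (\<And>l. i < l \<Longrightarrow> l \<le> j \<Longrightarrow> m l = 0) \<Longrightarrow> dw \<alpha> v m j h = dw \<alpha> v m i h"
proof (induction j)
  case 0 then show ?case by simp
next
  case (Suc j)
  show ?case
  proof (cases "i = Suc j")
    case False
    then have "i \<le> j" using Suc.prems by simp
    then show ?thesis using Suc by simp
  qed simp
qed

lemma dw_comm: "h \<in> Alg \<Longrightarrow> pd u (dw \<alpha> v m j h) = dw \<alpha> v m j (pd u h)"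
  by (induction j) (auto simp: Ew_comm dw_Alg)

lemma dw_leibniz:
  assumes f: "f \<in> Alg" and g: "g \<in> Alg"
  shows "dw \<alpha> v m j (\<lambda>p. f p * g p) = (\<lambda>p. \<Sum>a\<in>Box m j. dw \<alpha> v a j f p * dw \<alpha> v (\<lambda>i. m i - a i) j g p)"
proof (induction j)
  case 0
  then show ?case by (simp add: Box_0)
next
  case (Suc j)
  define n where "n = m (Suc j)"
  define c where "c = \<alpha> (Suc j)"
  define w where "w = v (Suc j)"
  let ?F = "\<lambda>a. dw \<alpha> v a j f" and ?G = "\<lambda>a. dw \<alpha> v (\<lambda>i. m i - a i) j g"
  have FA: "\<And>a. ?F a \<in> Alg" and GA: "\<And>a. ?G a \<in> Alg" using f g dw_Alg by auto
  have "dw \<alpha> v m (Suc j) (\<lambda>p. f p * g p) = Ew c w n (\<lambda>p. \<Sum>a\<in>Box m j. ?F a p * ?G a p)"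
    using Suc unfolding n_def c_def w_def by simp
  also have "\<dots> = (\<lambda>p. \<Sum>a\<in>Box m j. Ew c w n (\<lambda>p. ?F a p * ?G a p) p)"
    by (rule Ew_sum) (intro Alg_mult FA GA)
  also have "\<dots> = (\<lambda>p. \<Sum>a\<in>Box m j. \<Sum>r\<le>n. Ew c w r (?F a) p * Ew c w (n - r) (?G a) p)"
    by (simp add: Ew_leibniz[OF FA GA])
  also have "\<dots> = (\<lambda>p. \<Sum>(a,r)\<in>Sigma (Box m j) (\<lambda>_. {..n}). Ew c w r (?F a) p * Ew c w (n - r) (?G a) p)"
    by (intro ext sum.Sigma finite_Box) auto
  also have "\<dots> = (\<lambda>p. \<Sum>a'\<in>Box m (Suc j). dw \<alpha> v a' (Suc j) f p * dw \<alpha> v (\<lambda>i. m i - a' i) (Suc j) g p)"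
  proof (rule ext, rule sum.reindex_bij_witness[where j = "\<lambda>(a,r). a(Suc j := r)" and i = "\<lambda>a'. (a'(Suc j := 0), a' (Suc j))"], goal_cases)
    case (1 p ar)
    obtain a r where ar: "ar = (a, r)" by fastforce
    have "a \<in> Box m j" using 1 ar by simp
    then have a0: "a (Suc j) = 0" unfolding Box_def by simp
    show ?case unfolding ar using a0 by (simp add: fun_upd_idem_iff)
  next
    case (2 p ar)
    obtain a r where ar: "ar = (a, r)" by fastforce
    have a: "a \<in> Box m j" and r: "r \<le> n" using 2 ar by simp_all
    have "a(Suc j := r) \<in> Box m (Suc j)" unfolding Box_def mem_Collect_eq
    proof
      fix i show "(1 \<le> i \<and> i \<le> Suc j \<longrightarrow> (a(Suc j := r)) i \<le> m i) \<and> (\<not> (1 \<le> i \<and> i \<le> Suc j) \<longrightarrow> (a(Suc j := r)) i = 0)"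
      proof (cases "i = Suc j")
        case True then show ?thesis using r n_def by simp
      next
        case False then show ?thesis using a unfolding Box_def by (simp add: le_Suc_eq)
      qed
    qed
    then show ?case unfolding ar by simp
  next
    case (3 p a')
    show ?case by simp
  next
    case (4 p a')
    have a': "a' \<in> Box m (Suc j)" using 4 by simp
    have "a'(Suc j := 0) \<in> Box m j" unfolding Box_def mem_Collect_eq
    proof
      fix i show "(1 \<le> i \<and> i \<le> j \<longrightarrow> (a'(Suc j := 0)) i \<le> m i) \<and> (\<not> (1 \<le> i \<and> i \<le> j) \<longrightarrow> (a'(Suc j := 0)) i = 0)"
        using a' unfolding Box_def mem_Collect_eq by (cases "i = Suc j") (simp_all add: le_Suc_eq)
    qed
    moreover have "a' (Suc j) \<le> n" using a' unfolding Box_def n_def by simp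
    ultimately show ?case by simp
  next
    case (5 p ar)
    obtain a r where ar: "ar = (a, r)" by fastforce
    have e1: "dw \<alpha> v (a(Suc j := r)) j f = dw \<alpha> v a j f" by (rule dw_cong) simp
    have e2: "dw \<alpha> v (\<lambda>i. m i - (a(Suc j := r)) i) j g = dw \<alpha> v (\<lambda>i. m i - a i) j g" by (rule dw_cong) simp
    show ?case unfolding ar using e1 e2 by (simp add: c_def w_def n_def)
  qed
  finally show ?case .
qed

definition wt :: "nat \<Rightarrow> (nat \<Rightarrow> nat) \<Rightarrow> nat" where
  "wt j a = (\<Sum>l=1..j. l * a l)"

lemma MI_iff: "m \<in> MI j \<longleftrightarrow> (\<forall>i. m i \<noteq> 0 \<longrightarrow> 1 \<le> i \<and> i \<le> j) \<and> wt j m = j"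
  unfolding MI_def wt_def by auto

lemma wt_eq: "(\<And>l. a l \<noteq> 0 \<Longrightarrow> l \<le> K1 \<and> l \<le> K2) \<Longrightarrow> wt K1 a = wt K2 a"
proof -
  assume h: "\<And>l. a l \<noteq> 0 \<Longrightarrow> l \<le> K1 \<and> l \<le> K2"
  have "wt K a = (\<Sum>l=1..min K1 K2. l * a l)" if "K = K1 \<or> K = K2" for K
    unfolding wt_def
  proof (rule sum.mono_neutral_right)
    show "\<forall>i\<in>{1..K} - {1..min K1 K2}. i * a i = 0"
    proof
      fix i assume i: "i \<in> {1..K} - {1..min K1 K2}"
      show "i * a i = 0"
      proof (rule ccontr)
        assume "i * a i \<noteq> 0"
        then have "a i \<noteq> 0" by simp
        from h[OF this] i that show False by auto
      qed
    qed
  qed (use that in auto)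
  then show ?thesis by auto
qed

lemma le_wt: "1 \<le> l \<Longrightarrow> l \<le> j \<Longrightarrow> l * a l \<le> wt j a"
  unfolding wt_def by (rule member_le_sum) auto

lemma MI_sub_Box: "MI j \<subseteq> Box (\<lambda>_. j) j"
proof
  fix m assume m: "m \<in> MI j"
  have "m i \<le> j" if "1 \<le> i" "i \<le> j" for i
  proof -
    have "m i \<le> i * m i" using that by simp
    also have "\<dots> \<le> wt j m" by (rule le_wt) (use that in auto)
    finally show ?thesis using m unfolding MI_iff by simp
  qed
  then show "m \<in> Box (\<lambda>_. j) j" using m unfolding MI_iff Box_def by auto
qed

lemma finite_MI: "finite (MI j)"
  using finite_subset[OF MI_sub_Box finite_Box] .

lemma MI_0: "MI 0 = {\<lambda>_. 0}"
  unfolding MI_def by auto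

definition GG :: "(nat \<Rightarrow> complex) \<Rightarrow> (nat \<Rightarrow> var) \<Rightarrow> nat \<Rightarrow> fn \<Rightarrow> fn" where
  "GG \<alpha> v j h = (\<lambda>p. \<Sum>m\<in>MI j. dw \<alpha> v m j h p)"

lemma GG_Alg: "h \<in> Alg \<Longrightarrow> GG \<alpha> v j h \<in> Alg"
  unfolding GG_def by (intro Alg_sum dw_Alg)

lemma GG_comm: "h \<in> Alg \<Longrightarrow> pd u (GG \<alpha> v j h) = GG \<alpha> v j (pd u h)"
  unfolding GG_def by (simp add: pd_sum dw_Alg dw_comm)

lemma GG_0[simp]: "GG \<alpha> v 0 h = h"
  unfolding GG_def MI_0 by simp

lemma GG_leibniz:
  assumes f: "f \<in> Alg" and g: "g \<in> Alg"
  shows "GG \<alpha> v j (\<lambda>p. f p * g p) = (\<lambda>p. \<Sum>i\<le>j. GG \<alpha> v i f p * GG \<alpha> v (j - i) g p)"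
proof (rule ext)
  fix p
  have "GG \<alpha> v j (\<lambda>p. f p * g p) p = (\<Sum>m\<in>MI j. \<Sum>a\<in>Box m j. dw \<alpha> v a j f p * dw \<alpha> v (\<lambda>i. m i - a i) j g p)"
    unfolding GG_def dw_leibniz[OF f g] ..
  also have "\<dots> = (\<Sum>(m,a)\<in>Sigma (MI j) (\<lambda>m. Box m j). dw \<alpha> v a j f p * dw \<alpha> v (\<lambda>i. m i - a i) j g p)"
    by (intro sum.Sigma finite_MI ballI finite_Box)
  also have "\<dots> = (\<Sum>(i,a,b)\<in>Sigma {..j} (\<lambda>i. MI i \<times> MI (j - i)). dw \<alpha> v a i f p * dw \<alpha> v b (j - i) g p)"
  proof (rule sym, rule sum.reindex_bij_witness[where j = "\<lambda>(i,a,b). (\<lambda>l. a l + b l, a)" and i = "\<lambda>(m,a). (wt j a, a, \<lambda>l. m l - a l)"], goal_cases)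
    case (1 iab)
    obtain i a b where [simp]: "iab = (i, a, b)" by (cases iab) auto
    from 1 have i: "i \<le> j" and a: "a \<in> MI i" and b: "b \<in> MI (j - i)" by auto
    have "wt j a = wt i a" by (rule wt_eq) (metis MI_iff a i le_trans)
    then show ?case using a by (auto simp: MI_iff)
  next
    case (2 iab)
    obtain i a b where [simp]: "iab = (i, a, b)" by (cases iab) auto
    from 2 have i: "i \<le> j" and a: "a \<in> MI i" and b: "b \<in> MI (j - i)" by auto
    have "wt j a = wt i a" by (rule wt_eq) (metis MI_iff a i le_trans)
    then have wa: "wt j a = i" using a by (simp add: MI_iff)
    have "wt j b = wt (j - i) b" by (rule wt_eq) (metis MI_iff b diff_le_self le_trans)
    then have wb: "wt j b = j - i" using b by (simp add: MI_iff)
    have "wt j (\<lambda>l. a l + b l) = wt j a + wt j b" unfolding wt_def by (simp add: algebra_simps sum.distrib)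
    then have "wt j (\<lambda>l. a l + b l) = j" using wa wb i by simp
    moreover have "(\<lambda>l. a l + b l) l \<noteq> 0 \<Longrightarrow> 1 \<le> l \<and> l \<le> j" for l
      using a b i unfolding MI_iff by (metis add_is_0 diff_le_self le_trans)
    moreover have "a \<in> Box (\<lambda>l. a l + b l) j" using a i unfolding Box_def MI_iff by auto
    ultimately show ?case by (auto simp: MI_iff)
  next
    case (3 ma)
    obtain m a where [simp]: "ma = (m, a)" by (cases ma) auto
    from 3 have a: "a \<in> Box m j" by auto
    have "a l + (m l - a l) = m l" for l
    proof (cases "1 \<le> l \<and> l \<le> j")
      case True then have "a l \<le> m l" using a unfolding Box_def by auto
      then show ?thesis by simp
    next
      case False then have "a l = 0" using a unfolding Box_def by auto
      then show ?thesis by simp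
    qed
    then show ?case by simp
  next
    case (4 ma)
    obtain m a where [simp]: "ma = (m, a)" by (cases ma) auto
    from 4 have m: "m \<in> MI j" and a: "a \<in> Box m j" by auto
    have am: "1 \<le> l \<Longrightarrow> l \<le> j \<Longrightarrow> a l \<le> m l" for l using a unfolding Box_def by auto
    have aout: "\<not>(1 \<le> l \<and> l \<le> j) \<Longrightarrow> a l = 0" for l using a unfolding Box_def by auto
    have wm: "wt j m = j" using m by (simp add: MI_iff)
    have "wt j a \<le> wt j m" unfolding wt_def by (rule sum_mono) (auto intro: mult_le_mono2 am)
    then have wle: "wt j a \<le> j" using wm by simp
    have "(\<Sum>l=1..j. l * (m l - a l)) = (\<Sum>l=1..j. l * m l - l * a l)" by (simp add: diff_mult_distrib2)
    also have "\<dots> = (\<Sum>l=1..j. l * m l) - (\<Sum>l=1..j. l * a l)"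
      by (rule sum_subtractf_nat) (auto intro: mult_le_mono2 am)
    finally have wdiff: "wt j (\<lambda>l. m l - a l) = j - wt j a" using wm unfolding wt_def by simp
    have sa: "a l \<noteq> 0 \<Longrightarrow> 1 \<le> l \<and> l \<le> wt j a \<and> l \<le> j" for l
    proof -
      assume "a l \<noteq> 0"
      then have l: "1 \<le> l" "l \<le> j" using aout[of l] by auto
      have "l \<le> l * a l" using \<open>a l \<noteq> 0\<close> by (cases "a l") auto
      also have "\<dots> \<le> wt j a" by (rule le_wt[where l=l and j=j and a=a, OF l])
      finally show ?thesis using l by simp
    qed
    have sb: "m l - a l \<noteq> 0 \<Longrightarrow> 1 \<le> l \<and> l \<le> j - wt j a \<and> l \<le> j" for l
    proof -
      assume "m l - a l \<noteq> 0"
      then have "m l \<noteq> 0" by auto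
      then have l: "1 \<le> l" "l \<le> j" using m unfolding MI_iff by auto
      have "l \<le> l * (m l - a l)" using \<open>m l - a l \<noteq> 0\<close> by (cases "m l - a l") auto
      also have "\<dots> \<le> wt j (\<lambda>l. m l - a l)" using le_wt[where l=l and j=j and a="\<lambda>l. m l - a l", OF l] by simp
      finally show ?thesis using l wdiff by simp
    qed
    have "wt (wt j a) a = wt j a" by (rule wt_eq) (use sa in blast)
    then have A: "a \<in> MI (wt j a)" unfolding MI_iff using sa by blast
    have "wt (j - wt j a) (\<lambda>l. m l - a l) = wt j (\<lambda>l. m l - a l)" by (rule wt_eq) (use sb in blast)
    then have B: "(\<lambda>l. m l - a l) \<in> MI (j - wt j a)" unfolding MI_iff using sb wdiff by simp
    show ?case using A B wle by simp
  next
    case (5 iab)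
    obtain i a b where [simp]: "iab = (i, a, b)" by (cases iab) auto
    from 5 have i: "i \<le> j" and a: "a \<in> MI i" and b: "b \<in> MI (j - i)" by auto
    have e1: "dw \<alpha> v a j f = dw \<alpha> v a i f" by (rule dw_ext) (use i a in \<open>auto simp: MI_iff\<close>)
    have e2: "dw \<alpha> v (\<lambda>l. a l + b l - a l) j g = dw \<alpha> v b j g" by simp
    have e3: "dw \<alpha> v b j g = dw \<alpha> v b (j - i) g" by (rule dw_ext) (use i b in \<open>auto simp: MI_iff\<close>)
    show ?case using e1 e2 e3 by simp
  qed
  also have "\<dots> = (\<Sum>i\<le>j. \<Sum>(a,b)\<in>MI i \<times> MI (j - i). dw \<alpha> v a i f p * dw \<alpha> v b (j - i) g p)"
    by (subst sum.Sigma[symmetric]) (auto intro!: finite_cartesian_product finite_MI)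
  also have "\<dots> = (\<Sum>i\<le>j. GG \<alpha> v i f p * GG \<alpha> v (j - i) g p)"
    unfolding GG_def sum_product sum.cartesian_product ..
  finally show "GG \<alpha> v j (\<lambda>p. f p * g p) p = (\<Sum>i\<le>j. GG \<alpha> v i f p * GG \<alpha> v (j - i) g p)" .
qed


lemma dmi_Alg: "h \<in> Alg \<Longrightarrow> dmi v m j h \<in> Alg"
  by (induction j) (auto intro: pdpow_Alg)

lemma dw_dmi: "h \<in> Alg \<Longrightarrow> dw \<alpha> v m j h = (\<lambda>p. (\<Prod>i=1..j. \<alpha> i ^ m i / fact (m i)) * dmi v m j h p)"
proof (induction j)
  case 0
  then show ?case by simp
next
  case (Suc j)
  have pr: "(\<Prod>i=1..Suc j. \<alpha> i ^ m i / fact (m i)) = (\<alpha> (Suc j) ^ m (Suc j) / fact (m (Suc j))) * (\<Prod>i=1..j. \<alpha> i ^ m i / fact (m i))"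
  proof -
    have "{1..Suc j} = insert (Suc j) {1..j}" by auto
    then show ?thesis by simp
  qed
  show ?case
    unfolding dw.simps Suc.IH[OF Suc.prems] Ew_def Ed_def pdpow_cmult[OF dmi_Alg[OF Suc.prems]] pr
    by (simp add: field_simps)
qed

definition aT :: "nat \<Rightarrow> complex" where "aT = (\<lambda>i. complex_of_real (- 1 / real i))"
definition aB :: "nat \<Rightarrow> complex" where "aB = (\<lambda>i. complex_of_real (1 / real i))"

lemma Gc_GG: "h \<in> Alg \<Longrightarrow> Gc j h = GG aT T j h"
  unfolding Gc_def GG_def by (simp add: dw_dmi aT_def)

lemma Gbc_GG: "h \<in> Alg \<Longrightarrow> Gbc j h = (\<lambda>p. GG aB Tb j h (shiftp 1 p))"
  unfolding Gbc_def GG_def by (simp add: dw_dmi aB_def)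

lemma KEY:
  assumes t: "\<tau> \<in> Alg" and nz: "\<And>p. \<tau> p \<noteq> 0"
  shows "pd u (\<lambda>p. GG \<alpha> v j \<tau> (shiftp k p) / \<tau> p) =
    (\<lambda>p. \<Sum>i\<le>j. (GG \<alpha> v i (\<lambda>q. pd u \<tau> q / \<tau> q) (shiftp k p) - (if i = 0 then pd u \<tau> p / \<tau> p else 0))
             * (GG \<alpha> v (j - i) \<tau> (shiftp k p) / \<tau> p))"
proof -
  define f where "f = (\<lambda>q. pd u \<tau> q / \<tau> q)"
  have ts: "smooth_fn \<tau>" using t Alg_smooth_iff by blast
  have it: "(\<lambda>p. inverse (\<tau> p)) \<in> Alg" using ts nz by (intro Alg_inv) auto
  have fA: "f \<in> Alg" unfolding f_def divide_inverse by (intro Alg_mult Alg_pd t it)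
  have pt: "pd u \<tau> = (\<lambda>p. f p * \<tau> p)" unfolding f_def using nz by (auto intro!: ext)
  have G: "GG \<alpha> v j \<tau> \<in> Alg" by (rule GG_Alg[OF t])
  have H1: "HD u (\<lambda>p. GG \<alpha> v j \<tau> (shiftp k p)) (\<lambda>p. pd u (GG \<alpha> v j \<tau>) (shiftp k p))"
    by (rule HD_shift[OF Alg_HD'[OF G]])
  have H2: "HD u (\<lambda>p. inverse (\<tau> p)) (\<lambda>p. - pd u \<tau> p * (inverse (\<tau> p) * inverse (\<tau> p)))"
    by (rule HD_inverse[OF Alg_HD'[OF t] nz])
  have "pd u (\<lambda>p. GG \<alpha> v j \<tau> (shiftp k p) / \<tau> p) = pd u (\<lambda>p. GG \<alpha> v j \<tau> (shiftp k p) * inverse (\<tau> p))"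
    by (simp add: divide_inverse)
  also have "\<dots> = (\<lambda>p. pd u (GG \<alpha> v j \<tau>) (shiftp k p) * inverse (\<tau> p) + GG \<alpha> v j \<tau> (shiftp k p) * (- pd u \<tau> p * (inverse (\<tau> p) * inverse (\<tau> p))))"
    by (rule HD_pd[OF HD_mult[OF H1 H2]])
  also have "\<dots> = (\<lambda>p. (\<Sum>i\<le>j. GG \<alpha> v i f (shiftp k p) * GG \<alpha> v (j - i) \<tau> (shiftp k p)) * inverse (\<tau> p) - f p * (GG \<alpha> v j \<tau> (shiftp k p) * inverse (\<tau> p)))"
    unfolding GG_comm[OF t] pt GG_leibniz[OF fA t] using nz by (auto intro!: ext simp: field_simps)
  also have "\<dots> = (\<lambda>p. \<Sum>i\<le>j. (GG \<alpha> v i f (shiftp k p) - (if i = 0 then f p else 0)) * (GG \<alpha> v (j - i) \<tau> (shiftp k p) / \<tau> p))"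
  proof (rule ext)
    fix p
    have "(\<Sum>i\<le>j. (GG \<alpha> v i f (shiftp k p) - (if i = 0 then f p else 0)) * (GG \<alpha> v (j - i) \<tau> (shiftp k p) / \<tau> p))
       = (\<Sum>i\<le>j. GG \<alpha> v i f (shiftp k p) * (GG \<alpha> v (j - i) \<tau> (shiftp k p) / \<tau> p))
         - (\<Sum>i\<le>j. (if i = 0 then f p * (GG \<alpha> v j \<tau> (shiftp k p) / \<tau> p) else 0))"
      unfolding sum_subtractf[symmetric] by (intro sum.cong refl) (auto simp: algebra_simps)
    also have "\<dots> = (\<Sum>i\<le>j. GG \<alpha> v i f (shiftp k p) * GG \<alpha> v (j - i) \<tau> (shiftp k p)) * inverse (\<tau> p) - f p * (GG \<alpha> v j \<tau> (shiftp k p) * inverse (\<tau> p))"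
      by (simp add: sum_distrib_right divide_inverse mult.assoc)
    finally show "(\<Sum>i\<le>j. GG \<alpha> v i f (shiftp k p) * GG \<alpha> v (j - i) \<tau> (shiftp k p)) * inverse (\<tau> p) - f p * (GG \<alpha> v j \<tau> (shiftp k p) * inverse (\<tau> p))
       = (\<Sum>i\<le>j. (GG \<alpha> v i f (shiftp k p) - (if i = 0 then f p else 0)) * (GG \<alpha> v (j - i) \<tau> (shiftp k p) / \<tau> p))" by simp
  qed
  finally show ?thesis unfolding f_def .
qed

lemma sdiv_eq:
  assumes d0: "\<And>p. den 0 p \<noteq> 0" and e: "\<And>j p. num j p = (\<Sum>i\<le>j. q i p * den (j - i) p)"
  shows "sdiv num den = q"
  unfolding sdiv_def
proof (rule the_equality)
  show "\<forall>j p. num j p = (\<Sum>i\<le>j. q i p * den (j - i) p)" using e by blast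
next
  fix q' assume q': "\<forall>j p. num j p = (\<Sum>i\<le>j. q' i p * den (j - i) p)"
  have "q' j = q j" for j
  proof (induction j rule: less_induct)
    case (less j)
    show ?case
    proof
      fix p
      have sp: "(\<Sum>i\<le>j. r i p * den (j - i) p) = r j p * den 0 p + (\<Sum>i<j. r i p * den (j - i) p)" for r :: "nat \<Rightarrow> fn"
      proof -
        have "{..j} = insert j {..<j}" by auto
        then show ?thesis by simp
      qed
      have "(\<Sum>i<j. q' i p * den (j - i) p) = (\<Sum>i<j. q i p * den (j - i) p)"
        using less by (intro sum.cong) auto
      then have a: "num j p = q' j p * den 0 p + (\<Sum>i<j. q i p * den (j - i) p)"
        using q'[rule_format, of j p] sp[of q'] by simp
      have b: "num j p = q j p * den 0 p + (\<Sum>i<j. q i p * den (j - i) p)"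
        using e[of j p] sp[of q] by simp
      from a b have "q' j p * den 0 p = q j p * den 0 p" by (metis add_right_cancel)
      then show "q' j p = q j p" using d0[of p] by (metis mult_cancel_right)
    qed
  qed
  then show "q' = q" by auto
qed

lemma Wop_j: "Wop \<tau> (- int j) = (\<lambda>p. Gc j \<tau> p / \<tau> p)"
  unfolding Wop_def by simp

lemma Wbop_j: "Wbop \<tau> (int j) = (\<lambda>p. Gbc j \<tau> p / \<tau> p)"
  unfolding Wbop_def by simp

lemma ASvM_W:
  assumes t: "\<tau> \<in> Alg" and nz: "\<And>p. \<tau> p \<noteq> 0"
  shows "sdiv (\<lambda>j p. pd u (Wop \<tau> (- int j)) p) (\<lambda>j. Wop \<tau> (- int j))
     = (\<lambda>j p. Gc j (\<lambda>q. pd u \<tau> q / \<tau> q) p - (if j = 0 then pd u \<tau> p / \<tau> p else 0))"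
proof (rule sdiv_eq)
  have fA: "(\<lambda>q. pd u \<tau> q / \<tau> q) \<in> Alg"
    unfolding divide_inverse using t nz Alg_smooth_iff by (intro Alg_mult Alg_pd Alg_inv) auto
  fix j p
  have W: "Wop \<tau> (- int i) = (\<lambda>p. GG aT T i \<tau> (shiftp 0 p) / \<tau> p)" for i
    unfolding Wop_j Gc_GG[OF t] by simp
  show "pd u (Wop \<tau> (- int j)) p = (\<Sum>i\<le>j. (Gc i (\<lambda>q. pd u \<tau> q / \<tau> q) p - (if i = 0 then pd u \<tau> p / \<tau> p else 0)) * Wop \<tau> (- int (j - i)) p)"
    unfolding W KEY[OF t nz] Gc_GG[OF fA] by simp
next
  fix p show "Wop \<tau> (- int 0) p \<noteq> 0" unfolding Wop_j Gc_GG[OF t] using nz by simp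
qed

lemma ASvM_Wb:
  assumes t: "\<tau> \<in> Alg" and nz: "\<And>p. \<tau> p \<noteq> 0"
  shows "sdiv (\<lambda>j p. pd u (Wbop \<tau> (int j)) p) (\<lambda>j. Wbop \<tau> (int j))
     = (\<lambda>j p. Gbc j (\<lambda>q. pd u \<tau> q / \<tau> q) p - (if j = 0 then pd u \<tau> p / \<tau> p else 0))"
proof (rule sdiv_eq)
  have fA: "(\<lambda>q. pd u \<tau> q / \<tau> q) \<in> Alg"
    unfolding divide_inverse using t nz Alg_smooth_iff by (intro Alg_mult Alg_pd Alg_inv) auto
  fix j p
  have W: "Wbop \<tau> (int i) = (\<lambda>p. GG aB Tb i \<tau> (shiftp 1 p) / \<tau> p)" for i
    unfolding Wbop_j Gbc_GG[OF t] by simp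
  show "pd u (Wbop \<tau> (int j)) p = (\<Sum>i\<le>j. (Gbc i (\<lambda>q. pd u \<tau> q / \<tau> q) p - (if i = 0 then pd u \<tau> p / \<tau> p else 0)) * Wbop \<tau> (int (j - i)) p)"
    unfolding W KEY[OF t nz] Gbc_GG[OF fA] by simp
next
  fix p show "Wbop \<tau> (int 0) p \<noteq> 0" unfolding Wbop_j Gbc_GG[OF t] using nz by simp
qed



lemma iterpd_shift: "f \<in> Alg \<Longrightarrow> iterpd vs (\<lambda>p. f (shiftp k p)) = (\<lambda>p. iterpd vs f (shiftp k p)) \<and> iterpd vs f \<in> Alg"
proof (induction vs)
  case Nil then show ?case by (simp add: iterpd_def)
next
  case (Cons v vs)
  then show ?case by (simp add: iterpd_Cons pd_shift Alg_pd)
qed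

lemma Alg_shift: "f \<in> Alg \<Longrightarrow> (\<lambda>p. f (shiftp k p)) \<in> Alg"
proof -
  assume f: "f \<in> Alg"
  have "smooth_fn (\<lambda>p. f (shiftp k p))" unfolding smooth_fn_def
  proof
    fix vs
    have e: "iterpd vs (\<lambda>p. f (shiftp k p)) = (\<lambda>p. iterpd vs f (shiftp k p))" and G: "iterpd vs f \<in> Alg"
      using iterpd_shift[OF f] by auto
    show "(\<forall>v p. (\<lambda>y. iterpd vs (\<lambda>p. f (shiftp k p)) (p(v := y))) differentiable at (p v)) \<and>
          (\<forall>v w. pd v (pd w (iterpd vs (\<lambda>p. f (shiftp k p)))) = pd w (pd v (iterpd vs (\<lambda>p. f (shiftp k p)))))"
      unfolding e
    proof (intro conjI allI)
      fix v p show "(\<lambda>y. iterpd vs f (shiftp k (p(v := y)))) differentiable at (p v)"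
        using HD_diff[OF HD_shift[OF Alg_HD'[OF G]]] by blast
    next
      fix v w show "pd v (pd w (\<lambda>p. iterpd vs f (shiftp k p))) = pd w (pd v (\<lambda>p. iterpd vs f (shiftp k p)))"
        using pd_shift[OF G] pd_shift[OF Alg_pd[OF G]] Alg_comm[OF G] by simp
    qed
  qed
  then show ?thesis by (rule Alg_smooth)
qed

abbreviation zf :: fn where "zf \<equiv> (\<lambda>_. 0)"
definition Zop :: dop where "Zop = (\<lambda>i p. 0)"

definition UB :: "dop \<Rightarrow> bool" where "UB A \<longleftrightarrow> (\<exists>N. \<forall>i>N. A i = zf)"
definition LB :: "dop \<Rightarrow> bool" where "LB A \<longleftrightarrow> (\<exists>N. \<forall>i<N. A i = zf)"
definition BD :: "dop \<Rightarrow> bool" where "BD A \<longleftrightarrow> UB A \<and> LB A"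
definition FS :: "dop \<Rightarrow> dop \<Rightarrow> bool" where "FS A B \<longleftrightarrow> (\<forall>k. finite {i. A i \<noteq> zf \<and> B (k - i) \<noteq> zf})"
definition CA :: "dop \<Rightarrow> bool" where "CA A \<longleftrightarrow> (\<forall>i. A i \<in> Alg)"

lemma dmul_sup:
  assumes "finite F" "{i. A i \<noteq> zf \<and> B (k - i) \<noteq> zf} \<subseteq> F"
  shows "(A ** B) k p = (\<Sum>i\<in>F. A i p * B (k - i) (shiftp i p))"
  unfolding dmul_def
proof (rule sum.mono_neutral_left[OF assms])
  show "\<forall>i\<in>F - {i. A i \<noteq> zf \<and> B (k - i) \<noteq> zf}. A i p * B (k - i) (shiftp i p) = 0"
  proof
    fix i assume "i \<in> F - {i. A i \<noteq> zf \<and> B (k - i) \<noteq> zf}"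
    then have "A i = zf \<or> B (k - i) = zf" by auto
    then show "A i p * B (k - i) (shiftp i p) = 0" by auto
  qed
qed

lemma dmul_empty: "(\<forall>i. \<not> (A i \<noteq> zf \<and> B (k - i) \<noteq> zf)) \<Longrightarrow> (A ** B) k = zf"
proof -
  assume "\<forall>i. \<not> (A i \<noteq> zf \<and> B (k - i) \<noteq> zf)"
  then have E: "{i. A i \<noteq> zf \<and> B (k - i) \<noteq> zf} = {}" by auto
  show ?thesis unfolding dmul_def E by simp
qed

lemma dmul_nz: "(A ** B) k \<noteq> zf \<Longrightarrow> \<exists>i. A i \<noteq> zf \<and> B (k - i) \<noteq> zf"
  using dmul_empty by blast

lemma dmul_assoc:
  assumes fin: "\<And>k. finite {(i, j). A i \<noteq> zf \<and> B j \<noteq> zf \<and> C (k - i - j) \<noteq> zf}"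
  shows "(A ** B) ** C = A ** (B ** C)"
proof (intro ext)
  fix k p
  define T where "T = {(i, j). A i \<noteq> zf \<and> B j \<noteq> zf \<and> C (k - i - j) \<noteq> zf}"
  have fT: "finite T" using fin unfolding T_def .
  define X where "X = (\<lambda>(i,j). A i p * B j (shiftp i p) * C (k - i - j) (shiftp (i + j) p))"
  have Xz: "X (i, j) = 0" if "(i, j) \<notin> T" for i j
  proof -
    from that have "A i = zf \<or> B j = zf \<or> C (k - i - j) = zf" unfolding T_def by auto
    then show ?thesis unfolding X_def by auto
  qed
  have fF0: "finite (fst ` T)" and fF2: "finite (snd ` T)" and fI1: "finite ((\<lambda>(i,j). i + j) ` T)"
    using fT by auto
  have "((A ** B) ** C) k p = (\<Sum>l\<in>(\<lambda>(i,j). i + j) ` T. (A ** B) l p * C (k - l) (shiftp l p))"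
  proof (rule dmul_sup[OF fI1], rule subsetI)
    fix l assume "l \<in> {i. (A ** B) i \<noteq> zf \<and> C (k - i) \<noteq> zf}"
    then have ab: "(A ** B) l \<noteq> zf" and c: "C (k - l) \<noteq> zf" by auto
    obtain i where i: "A i \<noteq> zf" "B (l - i) \<noteq> zf" using dmul_nz[OF ab] by blast
    have "(i, l - i) \<in> T" unfolding T_def using i c by simp
    then show "l \<in> (\<lambda>(i,j). i + j) ` T" by (rule rev_image_eqI) simp
  qed
  also have "\<dots> = (\<Sum>l\<in>(\<lambda>(i,j). i + j) ` T. \<Sum>i\<in>fst ` T. X (i, l - i))"
  proof (rule sum.cong[OF refl])
    fix l
    show "(A ** B) l p * C (k - l) (shiftp l p) = (\<Sum>i\<in>fst ` T. X (i, l - i))"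
    proof (cases "C (k - l) = zf")
      case True
      then show ?thesis unfolding X_def by simp
    next
      case False
      have "(A ** B) l p = (\<Sum>i\<in>fst ` T. A i p * B (l - i) (shiftp i p))"
      proof (rule dmul_sup[OF fF0], rule subsetI)
        fix i assume "i \<in> {i. A i \<noteq> zf \<and> B (l - i) \<noteq> zf}"
        then have "(i, l - i) \<in> T" unfolding T_def using False by simp
        then show "i \<in> fst ` T" by (rule rev_image_eqI) simp
      qed
      then show ?thesis unfolding X_def by (simp add: sum_distrib_right)
    qed
  qed
  also have "\<dots> = (\<Sum>(l,i)\<in>((\<lambda>(i,j). i + j) ` T) \<times> fst ` T. X (i, l - i))"
    by (rule sum.cartesian_product)
  also have "\<dots> = (\<Sum>(l,i)\<in>(\<lambda>(i,j). (i + j, i)) ` T. X (i, l - i))"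
  proof (rule sum.mono_neutral_right)
    show "finite (((\<lambda>(i,j). i + j) ` T) \<times> fst ` T)" using fF0 fI1 by auto
    show "(\<lambda>(i,j). (i + j, i)) ` T \<subseteq> ((\<lambda>(i,j). i + j) ` T) \<times> fst ` T" by force
    show "\<forall>x\<in>((\<lambda>(i,j). i + j) ` T) \<times> fst ` T - (\<lambda>(i,j). (i + j, i)) ` T. (case x of (l, i) \<Rightarrow> X (i, l - i)) = 0"
    proof
      fix x assume x: "x \<in> ((\<lambda>(i,j). i + j) ` T) \<times> fst ` T - (\<lambda>(i,j). (i + j, i)) ` T"
      obtain l i where [simp]: "x = (l, i)" by fastforce
      have "(i, l - i) \<notin> T"
      proof
        assume "(i, l - i) \<in> T"
        then have "(l, i) \<in> (\<lambda>(i,j). (i + j, i)) ` T" by (rule rev_image_eqI) simp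
        then show False using x by simp
      qed
      then show "(case x of (l, i) \<Rightarrow> X (i, l - i)) = 0" using Xz by simp
    qed
  qed
  also have "\<dots> = (\<Sum>x\<in>T. (\<lambda>(l,i). X (i, l - i)) ((\<lambda>(i,j). (i + j, i)) x))"
    by (rule sum.reindex[unfolded comp_def]) (auto simp: inj_on_def)
  also have "\<dots> = (\<Sum>ij\<in>T. X ij)"
    by (rule sum.cong) auto
  finally have LHS: "((A ** B) ** C) k p = (\<Sum>ij\<in>T. X ij)" .
  have "(A ** (B ** C)) k p = (\<Sum>i\<in>fst ` T. A i p * (B ** C) (k - i) (shiftp i p))"
  proof (rule dmul_sup[OF fF0], rule subsetI)
    fix i assume "i \<in> {i. A i \<noteq> zf \<and> (B ** C) (k - i) \<noteq> zf}"
    then have a: "A i \<noteq> zf" and bc: "(B ** C) (k - i) \<noteq> zf" by auto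
    obtain j where j: "B j \<noteq> zf" "C (k - i - j) \<noteq> zf" using dmul_nz[OF bc] by blast
    have "(i, j) \<in> T" unfolding T_def using a j by simp
    then show "i \<in> fst ` T" by (rule rev_image_eqI) simp
  qed
  also have "\<dots> = (\<Sum>i\<in>fst ` T. \<Sum>j\<in>snd ` T. X (i, j))"
  proof (rule sum.cong[OF refl])
    fix i
    show "A i p * (B ** C) (k - i) (shiftp i p) = (\<Sum>j\<in>snd ` T. X (i, j))"
    proof (cases "A i = zf")
      case True
      then show ?thesis unfolding X_def by simp
    next
      case False
      have "(B ** C) (k - i) (shiftp i p) = (\<Sum>j\<in>snd ` T. B j (shiftp i p) * C (k - i - j) (shiftp j (shiftp i p)))"
      proof (rule dmul_sup[OF fF2], rule subsetI)
        fix j assume "j \<in> {j. B j \<noteq> zf \<and> C (k - i - j) \<noteq> zf}"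
        then have "(i, j) \<in> T" unfolding T_def using False by simp
        then show "j \<in> snd ` T" by (rule rev_image_eqI) simp
      qed
      then show ?thesis unfolding X_def by (simp add: sum_distrib_left shiftp_add mult.assoc add.commute)
    qed
  qed
  also have "\<dots> = (\<Sum>ij\<in>fst ` T \<times> snd ` T. X ij)"
    by (rule sum.cartesian_product'[symmetric])
  also have "\<dots> = (\<Sum>ij\<in>T. X ij)"
  proof (rule sum.mono_neutral_right)
    show "finite (fst ` T \<times> snd ` T)" using fF0 fF2 by auto
    show "T \<subseteq> fst ` T \<times> snd ` T" by force
    show "\<forall>x\<in>fst ` T \<times> snd ` T - T. X x = 0" using Xz by auto
  qed
  finally show "((A ** B) ** C) k p = (A ** (B ** C)) k p" using LHS by simp
qed

lemma UB_D: "UB A \<Longrightarrow> \<exists>N. \<forall>i. A i \<noteq> zf \<longrightarrow> i \<le> N"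
  unfolding UB_def by (meson not_le)
lemma LB_D: "LB A \<Longrightarrow> \<exists>N. \<forall>i. A i \<noteq> zf \<longrightarrow> N \<le> i"
  unfolding LB_def by (meson not_le)

lemma fin_sub_box: "Q \<subseteq> {a..b} \<times> {c..d} \<Longrightarrow> finite (Q :: (int \<times> int) set)"
  by (rule finite_subset) auto

lemma assoc_U: assumes "UB A" "UB B" "UB C" shows "(A ** B) ** C = A ** (B ** C)"
proof (rule dmul_assoc)
  fix k
  obtain Na Nb Nc where a: "\<forall>i. A i \<noteq> zf \<longrightarrow> i \<le> Na" and b: "\<forall>i. B i \<noteq> zf \<longrightarrow> i \<le> Nb"
    and c: "\<forall>i. C i \<noteq> zf \<longrightarrow> i \<le> Nc" using assms UB_D by metis
  show "finite {(i, j). A i \<noteq> zf \<and> B j \<noteq> zf \<and> C (k - i - j) \<noteq> zf}"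
  proof (rule fin_sub_box[of _ "k - Nb - Nc" Na "k - Na - Nc" Nb], rule subsetI)
    fix x assume "x \<in> {(i, j). A i \<noteq> zf \<and> B j \<noteq> zf \<and> C (k - i - j) \<noteq> zf}"
    then obtain i j where x: "x = (i, j)" "A i \<noteq> zf" "B j \<noteq> zf" "C (k - i - j) \<noteq> zf" by auto
    then have "i \<le> Na" "j \<le> Nb" "k - i - j \<le> Nc" using a b c by auto
    then show "x \<in> {k - Nb - Nc..Na} \<times> {k - Na - Nc..Nb}" using x by auto
  qed
qed

lemma assoc_L: assumes "LB A" "LB B" "LB C" shows "(A ** B) ** C = A ** (B ** C)"
proof (rule dmul_assoc)
  fix k
  obtain Na Nb Nc where a: "\<forall>i. A i \<noteq> zf \<longrightarrow> Na \<le> i" and b: "\<forall>i. B i \<noteq> zf \<longrightarrow> Nb \<le> i"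
    and c: "\<forall>i. C i \<noteq> zf \<longrightarrow> Nc \<le> i" using assms LB_D by metis
  show "finite {(i, j). A i \<noteq> zf \<and> B j \<noteq> zf \<and> C (k - i - j) \<noteq> zf}"
  proof (rule fin_sub_box[of _ Na "k - Nb - Nc" Nb "k - Na - Nc"], rule subsetI)
    fix x assume "x \<in> {(i, j). A i \<noteq> zf \<and> B j \<noteq> zf \<and> C (k - i - j) \<noteq> zf}"
    then obtain i j where x: "x = (i, j)" "A i \<noteq> zf" "B j \<noteq> zf" "C (k - i - j) \<noteq> zf" by auto
    then have "Na \<le> i" "Nb \<le> j" "Nc \<le> k - i - j" using a b c by auto
    then show "x \<in> {Na..k - Nb - Nc} \<times> {Nb..k - Na - Nc}" using x by auto
  qed
qed

lemma assoc_AC: assumes "BD A" "BD C" shows "(A ** B) ** C = A ** (B ** C)"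
proof (rule dmul_assoc)
  fix k
  obtain Na Ma Nc Mc where a: "\<forall>i. A i \<noteq> zf \<longrightarrow> Ma \<le> i \<and> i \<le> Na"
    and c: "\<forall>i. C i \<noteq> zf \<longrightarrow> Mc \<le> i \<and> i \<le> Nc" using assms UB_D LB_D unfolding BD_def by metis
  show "finite {(i, j). A i \<noteq> zf \<and> B j \<noteq> zf \<and> C (k - i - j) \<noteq> zf}"
  proof (rule fin_sub_box[of _ Ma Na "k - Na - Nc" "k - Ma - Mc"], rule subsetI)
    fix x assume "x \<in> {(i, j). A i \<noteq> zf \<and> B j \<noteq> zf \<and> C (k - i - j) \<noteq> zf}"
    then obtain i j where x: "x = (i, j)" "A i \<noteq> zf" "C (k - i - j) \<noteq> zf" by auto
    then have "Ma \<le> i" "i \<le> Na" "Mc \<le> k - i - j" "k - i - j \<le> Nc" using a c by auto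
    then show "x \<in> {Ma..Na} \<times> {k - Na - Nc..k - Ma - Mc}" using x by auto
  qed
qed

lemma assoc_AB: assumes "BD A" "BD B" shows "(A ** B) ** C = A ** (B ** C)"
proof (rule dmul_assoc)
  fix k
  obtain Na Ma Nb Mb where a: "\<forall>i. A i \<noteq> zf \<longrightarrow> Ma \<le> i \<and> i \<le> Na"
    and b: "\<forall>i. B i \<noteq> zf \<longrightarrow> Mb \<le> i \<and> i \<le> Nb" using assms UB_D LB_D unfolding BD_def by metis
  show "finite {(i, j). A i \<noteq> zf \<and> B j \<noteq> zf \<and> C (k - i - j) \<noteq> zf}"
    by (rule fin_sub_box[of _ Ma Na Mb Nb]) (use a b in auto)
qed

lemma assoc_BC: assumes "BD B" "BD C" shows "(A ** B) ** C = A ** (B ** C)"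
proof (rule dmul_assoc)
  fix k
  obtain Nb Mb Nc Mc where b: "\<forall>i. B i \<noteq> zf \<longrightarrow> Mb \<le> i \<and> i \<le> Nb"
    and c: "\<forall>i. C i \<noteq> zf \<longrightarrow> Mc \<le> i \<and> i \<le> Nc" using assms UB_D LB_D unfolding BD_def by metis
  show "finite {(i, j). A i \<noteq> zf \<and> B j \<noteq> zf \<and> C (k - i - j) \<noteq> zf}"
  proof (rule fin_sub_box[of _ "k - Nb - Nc" "k - Mb - Mc" Mb Nb], rule subsetI)
    fix x assume "x \<in> {(i, j). A i \<noteq> zf \<and> B j \<noteq> zf \<and> C (k - i - j) \<noteq> zf}"
    then obtain i j where x: "x = (i, j)" "B j \<noteq> zf" "C (k - i - j) \<noteq> zf" by auto
    then have "Mb \<le> j" "j \<le> Nb" "Mc \<le> k - i - j" "k - i - j \<le> Nc" using b c by auto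
    then show "x \<in> {k - Nb - Nc..k - Mb - Mc} \<times> {Mb..Nb}" using x by auto
  qed
qed

lemma fin_int: "Q \<subseteq> {a..b} \<Longrightarrow> finite (Q :: int set)"
  by (rule finite_subset) auto

lemma FS_U: "UB A \<Longrightarrow> UB B \<Longrightarrow> FS A B"
  unfolding FS_def
proof
  fix k assume "UB A" "UB B"
  then obtain Na Nb where a: "\<forall>i. A i \<noteq> zf \<longrightarrow> i \<le> Na" and b: "\<forall>i. B i \<noteq> zf \<longrightarrow> i \<le> Nb"
    using UB_D by metis
  show "finite {i. A i \<noteq> zf \<and> B (k - i) \<noteq> zf}"
    by (rule fin_int[of _ "k - Nb" Na]) (use a b in force)
qed

lemma FS_L: "LB A \<Longrightarrow> LB B \<Longrightarrow> FS A B"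
  unfolding FS_def
proof
  fix k assume "LB A" "LB B"
  then obtain Na Nb where a: "\<forall>i. A i \<noteq> zf \<longrightarrow> Na \<le> i" and b: "\<forall>i. B i \<noteq> zf \<longrightarrow> Nb \<le> i"
    using LB_D by metis
  show "finite {i. A i \<noteq> zf \<and> B (k - i) \<noteq> zf}"
    by (rule fin_int[of _ Na "k - Nb"]) (use a b in force)
qed

lemma FS_BA: "BD A \<Longrightarrow> FS A B"
  unfolding FS_def
proof
  fix k assume "BD A"
  then obtain Na Ma where a: "\<forall>i. A i \<noteq> zf \<longrightarrow> Ma \<le> i \<and> i \<le> Na"
    using UB_D LB_D unfolding BD_def by metis
  show "finite {i. A i \<noteq> zf \<and> B (k - i) \<noteq> zf}"
    by (rule fin_int[of _ Ma Na]) (use a in force)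
qed

lemma FS_BB: "BD B \<Longrightarrow> FS A B"
  unfolding FS_def
proof
  fix k assume "BD B"
  then obtain Nb Mb where b: "\<forall>i. B i \<noteq> zf \<longrightarrow> Mb \<le> i \<and> i \<le> Nb"
    using UB_D LB_D unfolding BD_def by metis
  show "finite {i. A i \<noteq> zf \<and> B (k - i) \<noteq> zf}"
    by (rule fin_int[of _ "k - Nb" "k - Mb"]) (use b in force)
qed

lemma UB_mult: assumes "UB A" "UB B" shows "UB (A ** B)"
proof -
  obtain Na Nb where a: "\<forall>i. A i \<noteq> zf \<longrightarrow> i \<le> Na" and b: "\<forall>i. B i \<noteq> zf \<longrightarrow> i \<le> Nb"
    using assms UB_D by metis
  have "(A ** B) k = zf" if "k > Na + Nb" for k
    by (rule dmul_empty) (use a b that in force)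
  then show ?thesis unfolding UB_def by blast
qed

lemma LB_mult: assumes "LB A" "LB B" shows "LB (A ** B)"
proof -
  obtain Na Nb where a: "\<forall>i. A i \<noteq> zf \<longrightarrow> Na \<le> i" and b: "\<forall>i. B i \<noteq> zf \<longrightarrow> Nb \<le> i"
    using assms LB_D by metis
  have "(A ** B) k = zf" if "k < Na + Nb" for k
    by (rule dmul_empty) (use a b that in force)
  then show ?thesis unfolding LB_def by blast
qed

lemma BD_mult: "BD A \<Longrightarrow> BD B \<Longrightarrow> BD (A ** B)"
  unfolding BD_def using UB_mult LB_mult by blast

lemma lam_ne: "lam n i \<noteq> zf \<longleftrightarrow> i = n"
  unfolding lam_def by (auto dest: fun_cong)

lemma UB_lam: "UB (lam n)" unfolding UB_def lam_def by auto
lemma LB_lam: "LB (lam n)" unfolding LB_def lam_def by auto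
lemma BD_lam: "BD (lam n)" unfolding BD_def using UB_lam LB_lam by blast

lemma lam_left: "lam 0 ** A = A"
proof (intro ext)
  fix k p
  have "(lam 0 ** A) k p = (\<Sum>i\<in>{0}. lam 0 i p * A (k - i) (shiftp i p))"
    by (rule dmul_sup) (auto simp: lam_ne)
  then show "(lam 0 ** A) k p = A k p" by (simp add: lam_def)
qed

lemma lam_right: "A ** lam 0 = A"
proof (intro ext)
  fix k p
  have "(A ** lam 0) k p = (\<Sum>i\<in>{k}. A i p * lam 0 (k - i) (shiftp i p))"
    by (rule dmul_sup) (auto simp: lam_ne)
  then show "(A ** lam 0) k p = A k p" by (simp add: lam_def)
qed

lemma lam_mult: "lam a ** lam b = lam (a + b)"
proof (intro ext)
  fix k p
  have "(lam a ** lam b) k p = (\<Sum>i\<in>{a}. lam a i p * lam b (k - i) (shiftp i p))"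
    by (rule dmul_sup) (auto simp: lam_ne)
  then show "(lam a ** lam b) k p = lam (a + b) k p" by (auto simp: lam_def)
qed

lemma Zop_ne: "Zop i \<noteq> zf \<longleftrightarrow> False" unfolding Zop_def by simp

lemma dmul_Zop_right: "A ** Zop = Zop"
  by (intro ext) (simp add: dmul_empty Zop_ne, simp add: Zop_def)

lemma dmul_Zop_left: "Zop ** A = Zop"
  by (intro ext) (simp add: dmul_empty Zop_ne, simp add: Zop_def)

lemma dmul_dadd_left:
  assumes "FS A C" "FS B C" shows "dmul (dadd A B) C = dadd (A ** C) (B ** C)"
proof (intro ext)
  fix k p
  let ?F = "{i. A i \<noteq> zf \<and> C (k - i) \<noteq> zf} \<union> {i. B i \<noteq> zf \<and> C (k - i) \<noteq> zf}"
  have f: "finite ?F" using assms unfolding FS_def by auto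
  have 1: "(dadd A B ** C) k p = (\<Sum>i\<in>?F. dadd A B i p * C (k - i) (shiftp i p))"
    by (rule dmul_sup[OF f]) (auto simp: dadd_def)
  have 2: "(A ** C) k p = (\<Sum>i\<in>?F. A i p * C (k - i) (shiftp i p))"
    by (rule dmul_sup[OF f]) auto
  have 3: "(B ** C) k p = (\<Sum>i\<in>?F. B i p * C (k - i) (shiftp i p))"
    by (rule dmul_sup[OF f]) auto
  show "(dadd A B ** C) k p = dadd (A ** C) (B ** C) k p"
    unfolding dadd_def[of "A ** C"] 1 2 3 by (simp add: dadd_def sum.distrib distrib_right)
qed

lemma dmul_dadd_right:
  assumes "FS C A" "FS C B" shows "dmul C (dadd A B) = dadd (C ** A) (C ** B)"
proof (intro ext)
  fix k p
  let ?F = "{i. C i \<noteq> zf \<and> A (k - i) \<noteq> zf} \<union> {i. C i \<noteq> zf \<and> B (k - i) \<noteq> zf}"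
  have f: "finite ?F" using assms unfolding FS_def by auto
  have 1: "(C ** dadd A B) k p = (\<Sum>i\<in>?F. C i p * dadd A B (k - i) (shiftp i p))"
    by (rule dmul_sup[OF f]) (auto simp: dadd_def)
  have 2: "(C ** A) k p = (\<Sum>i\<in>?F. C i p * A (k - i) (shiftp i p))"
    by (rule dmul_sup[OF f]) auto
  have 3: "(C ** B) k p = (\<Sum>i\<in>?F. C i p * B (k - i) (shiftp i p))"
    by (rule dmul_sup[OF f]) auto
  show "(C ** dadd A B) k p = dadd (C ** A) (C ** B) k p"
    unfolding dadd_def[of "C ** A"] 1 2 3 by (simp add: dadd_def sum.distrib distrib_left)
qed

lemma dmul_dsmul_left: assumes "FS A B" shows "dsmul c A ** B = dsmul c (A ** B)"
proof (intro ext)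
  fix k p
  let ?F = "{i. A i \<noteq> zf \<and> B (k - i) \<noteq> zf}"
  have f: "finite ?F" using assms unfolding FS_def by auto
  have 1: "(dsmul c A ** B) k p = (\<Sum>i\<in>?F. dsmul c A i p * B (k - i) (shiftp i p))"
    by (rule dmul_sup[OF f]) (auto simp: dsmul_def)
  have 2: "(A ** B) k p = (\<Sum>i\<in>?F. A i p * B (k - i) (shiftp i p))"
    by (rule dmul_sup[OF f]) auto
  show "(dsmul c A ** B) k p = dsmul c (A ** B) k p"
    unfolding dsmul_def[of c "A ** B"] 1 2 by (simp add: dsmul_def sum_distrib_left mult.assoc)
qed

lemma dmul_dsmul_right: assumes "FS A B" shows "A ** dsmul c B = dsmul c (A ** B)"
proof (intro ext)
  fix k p
  let ?F = "{i. A i \<noteq> zf \<and> B (k - i) \<noteq> zf}"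
  have f: "finite ?F" using assms unfolding FS_def by auto
  have 1: "(A ** dsmul c B) k p = (\<Sum>i\<in>?F. A i p * dsmul c B (k - i) (shiftp i p))"
    by (rule dmul_sup[OF f]) (auto simp: dsmul_def)
  have 2: "(A ** B) k p = (\<Sum>i\<in>?F. A i p * B (k - i) (shiftp i p))"
    by (rule dmul_sup[OF f]) auto
  show "(A ** dsmul c B) k p = dsmul c (A ** B) k p"
    unfolding dsmul_def[of c "A ** B"] 1 2 by (simp add: dsmul_def sum_distrib_left mult_ac)
qed

lemma dpd_ne: "dpd v A i \<noteq> zf \<Longrightarrow> A i \<noteq> zf"
  unfolding dpd_def using pd_const by auto

lemma UB_dpd: assumes "UB A" shows "UB (dpd v A)"
proof -
  from assms obtain N where N: "\<forall>i>N. A i = zf" unfolding UB_def by blast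
  then have "\<forall>i>N. dpd v A i = zf" unfolding dpd_def using pd_const[of v 0] by simp
  then show ?thesis unfolding UB_def by blast
qed
lemma LB_dpd: assumes "LB A" shows "LB (dpd v A)"
proof -
  from assms obtain N where N: "\<forall>i<N. A i = zf" unfolding LB_def by blast
  then have "\<forall>i<N. dpd v A i = zf" unfolding dpd_def using pd_const[of v 0] by simp
  then show ?thesis unfolding LB_def by blast
qed
lemma UB_dsmul: assumes "UB A" shows "UB (dsmul c A)"
proof -
  from assms obtain N where N: "\<forall>i>N. A i = zf" unfolding UB_def by blast
  then have "\<forall>i>N. dsmul c A i = zf" unfolding dsmul_def by simp
  then show ?thesis unfolding UB_def by blast
qed
lemma LB_dsmul: assumes "LB A" shows "LB (dsmul c A)"
proof -
  from assms obtain N where N: "\<forall>i<N. A i = zf" unfolding LB_def by blast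
  then have "\<forall>i<N. dsmul c A i = zf" unfolding dsmul_def by simp
  then show ?thesis unfolding LB_def by blast
qed
lemma UB_dadd: assumes "UB A" "UB B" shows "UB (dadd A B)"
proof -
  from assms obtain N M where N: "\<forall>i>N. A i = zf" and M: "\<forall>i>M. B i = zf" unfolding UB_def by blast
  then have "\<forall>i>max N M. dadd A B i = zf" unfolding dadd_def by simp
  then show ?thesis unfolding UB_def by blast
qed
lemma LB_dadd: assumes "LB A" "LB B" shows "LB (dadd A B)"
proof -
  from assms obtain N M where N: "\<forall>i<N. A i = zf" and M: "\<forall>i<M. B i = zf" unfolding LB_def by blast
  then have "\<forall>i<min N M. dadd A B i = zf" unfolding dadd_def by simp
  then show ?thesis unfolding LB_def by blast
qed

lemma CA_dmul: assumes "FS A B" "CA A" "CA B" shows "CA (A ** B)"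
  unfolding CA_def
proof
  fix k
  let ?F = "{i. A i \<noteq> zf \<and> B (k - i) \<noteq> zf}"
  have f: "finite ?F" using assms unfolding FS_def by auto
  have "(A ** B) k = (\<lambda>p. \<Sum>i\<in>?F. A i p * B (k - i) (shiftp i p))"
    by (intro ext dmul_sup[OF f]) auto
  also have "\<dots> \<in> Alg" using assms(2,3) unfolding CA_def by (intro Alg_sum Alg_mult Alg_shift) auto
  finally show "(A ** B) k \<in> Alg" .
qed

lemma CA_dpd: "CA A \<Longrightarrow> CA (dpd v A)" unfolding CA_def dpd_def by (auto intro: Alg_pd)
lemma CA_lam: "CA (lam n)" unfolding CA_def lam_def by (auto intro: Alg_const)
lemma CA_dadd: "CA A \<Longrightarrow> CA B \<Longrightarrow> CA (dadd A B)" unfolding CA_def dadd_def by (auto intro: Alg_add)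
lemma CA_dsmul: "CA A \<Longrightarrow> CA (dsmul c A)" unfolding CA_def dsmul_def by (auto intro: Alg_cmult)

lemma dpd_dmul:
  assumes fs: "FS A B" and a: "CA A" and b: "CA B"
  shows "dpd v (A ** B) = dadd (dpd v A ** B) (A ** dpd v B)"
proof (rule ext)
  fix k
  let ?F = "{i. A i \<noteq> zf \<and> B (k - i) \<noteq> zf}"
  have f: "finite ?F" using fs unfolding FS_def by auto
  have e: "(A ** B) k = (\<lambda>p. \<Sum>i\<in>?F. A i p * B (k - i) (shiftp i p))"
    by (intro ext dmul_sup[OF f]) auto
  have e1: "(dpd v A ** B) k p = (\<Sum>i\<in>?F. dpd v A i p * B (k - i) (shiftp i p))" for p
    by (rule dmul_sup[OF f]) (auto dest: dpd_ne)
  have e2: "(A ** dpd v B) k p = (\<Sum>i\<in>?F. A i p * dpd v B (k - i) (shiftp i p))" for p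
    by (rule dmul_sup[OF f]) (auto dest: dpd_ne)
  have A: "A i \<in> Alg" "B i \<in> Alg" for i using a b unfolding CA_def by auto
  have "dpd v (A ** B) k = pd v (\<lambda>p. \<Sum>i\<in>?F. A i p * B (k - i) (shiftp i p))"
    unfolding dpd_def e ..
  also have "\<dots> = (\<lambda>p. \<Sum>i\<in>?F. pd v (\<lambda>p. A i p * B (k - i) (shiftp i p)) p)"
    by (rule pd_sum) (intro Alg_mult Alg_shift A)
  also have "\<dots> = (\<lambda>p. \<Sum>i\<in>?F. dpd v A i p * B (k - i) (shiftp i p) + A i p * dpd v B (k - i) (shiftp i p))"
  proof (intro ext sum.cong refl)
    fix p i
    show "pd v (\<lambda>p. A i p * B (k - i) (shiftp i p)) p = dpd v A i p * B (k - i) (shiftp i p) + A i p * dpd v B (k - i) (shiftp i p)"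
      using pd_mult[OF A(1)[of i] Alg_shift[OF A(2)[of "k - i"]]] pd_shift[OF A(2)[of "k - i"]]
      unfolding dpd_def by simp
  qed
  also have "\<dots> = dadd (dpd v A ** B) (A ** dpd v B) k"
    unfolding dadd_def e1 e2 by (simp add: sum.distrib)
  finally show "dpd v (A ** B) k = dadd (dpd v A ** B) (A ** dpd v B) k" .
qed



function vL :: "dop \<Rightarrow> nat \<Rightarrow> fn" where
  "vL W n = (\<lambda>p. (if n = 0 then 1 else 0) - (\<Sum>i<n. vL W i p * W (int i - int n) (shiftp (- int i) p)))"
  by auto
termination by (relation "Wellfounded.measure (\<lambda>(W, n). n)") auto

declare vL.simps[simp del]

function vLp :: "dop \<Rightarrow> nat \<Rightarrow> fn" where
  "vLp W n = (\<lambda>p. ((if n = 0 then 1 else 0) - (\<Sum>i<n. vLp W i p * W (int n - int i) (shiftp (int i) p))) / W 0 (shiftp (int n) p))"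
  by auto
termination by (relation "Wellfounded.measure (\<lambda>(W, n). n)") auto

declare vLp.simps[simp del]

lemma vL_Alg: assumes "CA W" shows "vL W n \<in> Alg"
proof (induction n rule: less_induct)
  case (less n)
  have "(\<lambda>p. (if n = 0 then 1 else 0) - (\<Sum>i<n. vL W i p * W (int i - int n) (shiftp (- int i) p))) \<in> Alg"
    using assms less unfolding CA_def by (intro Alg_diff Alg_const Alg_sum Alg_mult Alg_shift) auto
  then show ?case by (subst vL.simps)
qed

lemma vLp_Alg: assumes "CA W" "\<And>p. W 0 p \<noteq> 0" shows "vLp W n \<in> Alg"
proof (induction n rule: less_induct)
  case (less n)
  have w0: "(\<lambda>p. W 0 (shiftp (int n) p)) \<in> Alg" using assms(1) unfolding CA_def by (intro Alg_shift) auto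
  have "(\<lambda>p. ((if n = 0 then 1 else 0) - (\<Sum>i<n. vLp W i p * W (int n - int i) (shiftp (int i) p))) * inverse (W 0 (shiftp (int n) p))) \<in> Alg"
    using assms less w0 Alg_smooth_iff unfolding CA_def
    by (intro Alg_mult Alg_diff Alg_const Alg_sum Alg_shift Alg_inv) auto
  then show ?case by (subst vLp.simps) (simp add: divide_inverse)
qed

definition VL :: "dop \<Rightarrow> dop" where
  "VL W = (\<lambda>k. if k \<le> 0 then vL W (nat (- k)) else zf)"

definition VLp :: "dop \<Rightarrow> dop" where
  "VLp W = (\<lambda>k. if k \<ge> 0 then vLp W (nat k) else zf)"

lemma VL_left:
  assumes W0: "W 0 = (\<lambda>_. 1)" and Wp: "\<forall>i>0. W i = zf"
  shows "VL W ** W = lam 0"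
proof (intro ext)
  fix k p
  show "(VL W ** W) k p = lam 0 k p"
  proof (cases "k \<le> 0")
    case False
    have "(VL W ** W) k = zf"
      by (rule dmul_empty) (use False Wp in \<open>auto simp: VL_def\<close>)
    then show ?thesis using False by (simp add: lam_def)
  next
    case True
    define n where "n = nat (- k)"
    have k: "k = - int n" using True n_def by simp
    have "(VL W ** W) k p = (\<Sum>i\<in>(\<lambda>t. - int t) ` {..n}. VL W i p * W (k - i) (shiftp i p))"
    proof (rule dmul_sup, simp, rule subsetI)
      fix i assume "i \<in> {i. VL W i \<noteq> zf \<and> W (k - i) \<noteq> zf}"
      then have "i \<le> 0" "k - i \<le> 0" using Wp by (auto simp: VL_def split: if_splits)
      then have "i = - int (nat (- i))" "nat (- i) \<le> n" using k by auto
      then show "i \<in> (\<lambda>t. - int t) ` {..n}" by blast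
    qed
    also have "\<dots> = (\<Sum>t\<le>n. VL W (- int t) p * W (k + int t) (shiftp (- int t) p))"
      by (subst sum.reindex) (auto simp: inj_on_def)
    also have "\<dots> = (\<Sum>t\<le>n. vL W t p * W (int t - int n) (shiftp (- int t) p))"
      by (intro sum.cong refl) (auto simp: VL_def k)
    also have "\<dots> = (\<Sum>t<n. vL W t p * W (int t - int n) (shiftp (- int t) p)) + vL W n p"
      using W0 by (simp add: lessThan_Suc_atMost[symmetric])
    also have "\<dots> = (if n = 0 then 1 else 0)"
      by (subst (2) vL.simps) simp
    finally show ?thesis using k by (simp add: lam_def)
  qed
qed

lemma VLp_left:
  assumes W0: "\<And>p. W 0 p \<noteq> 0" and Wn: "\<forall>i<0. W i = zf"
  shows "VLp W ** W = lam 0"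
proof (intro ext)
  fix k p
  show "(VLp W ** W) k p = lam 0 k p"
  proof (cases "k \<ge> 0")
    case False
    have "(VLp W ** W) k = zf"
      by (rule dmul_empty) (use False Wn in \<open>auto simp: VLp_def\<close>)
    then show ?thesis using False by (simp add: lam_def)
  next
    case True
    define n where "n = nat k"
    have k: "k = int n" using True n_def by simp
    have "(VLp W ** W) k p = (\<Sum>i\<in>int ` {..n}. VLp W i p * W (k - i) (shiftp i p))"
    proof (rule dmul_sup, simp, rule subsetI)
      fix i assume "i \<in> {i. VLp W i \<noteq> zf \<and> W (k - i) \<noteq> zf}"
      then have "i \<ge> 0" "k - i \<ge> 0" using Wn by (auto simp: VLp_def not_le split: if_splits)
      then have "i = int (nat i)" "nat i \<le> n" using k by auto
      then show "i \<in> int ` {..n}" by blast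
    qed
    also have "\<dots> = (\<Sum>t\<le>n. VLp W (int t) p * W (k - int t) (shiftp (int t) p))"
      by (subst sum.reindex) (auto simp: inj_on_def)
    also have "\<dots> = (\<Sum>t\<le>n. vLp W t p * W (int n - int t) (shiftp (int t) p))"
      by (intro sum.cong refl) (auto simp: VLp_def k)
    also have "\<dots> = (\<Sum>t<n. vLp W t p * W (int n - int t) (shiftp (int t) p)) + vLp W n p * W 0 (shiftp (int n) p)"
      by (simp add: lessThan_Suc_atMost[symmetric])
    also have "\<dots> = (if n = 0 then 1 else 0)"
      by (subst (2) vLp.simps) (simp add: W0)
    finally show ?thesis using k by (simp add: lam_def)
  qed
qed

lemma UB0: "\<forall>i>0. A i = zf \<Longrightarrow> UB A" unfolding UB_def by blast
lemma LB0: "\<forall>i<0. A i = zf \<Longrightarrow> LB A" unfolding LB_def by blast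

lemma inv_neg_props:
  assumes W0: "W 0 = (\<lambda>_. 1)" and Wp: "\<forall>i>0. W i = zf" and ca: "CA W"
  shows "(\<forall>i>0. inv_neg W i = zf) \<and> W ** inv_neg W = lam 0 \<and> inv_neg W ** W = lam 0 \<and> CA (inv_neg W)"
proof -
  define V where "V = VL W"
  have Vp: "\<forall>i>0. V i = zf" unfolding V_def VL_def by auto
  have V0: "V 0 = (\<lambda>_. 1)" unfolding V_def VL_def by (subst vL.simps) simp
  have caV: "CA V" unfolding CA_def V_def VL_def using vL_Alg[OF ca] Alg_const by auto
  have VW: "V ** W = lam 0" unfolding V_def by (rule VL_left[OF W0 Wp])
  define U where "U = VL V"
  have Up: "\<forall>i>0. U i = zf" unfolding U_def VL_def by auto
  have UV: "U ** V = lam 0" unfolding U_def by (rule VL_left[OF V0 Vp])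
  have "U = U ** (V ** W)" by (simp add: VW lam_right)
  also have "\<dots> = (U ** V) ** W" by (rule assoc_U[symmetric]) (use UB0 Up Vp Wp in auto)
  also have "\<dots> = W" by (simp add: UV lam_left)
  finally have UW: "U = W" .
  have WV: "W ** V = lam 0" using UV UW by simp
  have "inv_neg W = V"
    unfolding inv_neg_def
  proof (rule the_equality)
    show "(\<forall>i>0. V i = zf) \<and> W ** V = lam 0 \<and> V ** W = lam 0" using Vp WV VW by simp
  next
    fix V' assume V': "(\<forall>i>0. V' i = (\<lambda>_. 0)) \<and> W ** V' = lam 0 \<and> V' ** W = lam 0"
    have "V' = V' ** (W ** V)" by (simp add: WV lam_right)
    also have "\<dots> = (V' ** W) ** V" by (rule assoc_U[symmetric]) (use UB0 V' Vp Wp in auto)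
    also have "\<dots> = V" using V' by (simp add: lam_left)
    finally show "V' = V" .
  qed
  then show ?thesis using Vp WV VW caV by simp
qed

lemma inv_pos_props:
  assumes W0: "\<And>p. W 0 p \<noteq> 0" and Wn: "\<forall>i<0. W i = zf" and ca: "CA W"
  shows "(\<forall>i<0. inv_pos W i = zf) \<and> W ** inv_pos W = lam 0 \<and> inv_pos W ** W = lam 0 \<and> CA (inv_pos W)"
proof -
  define V where "V = VLp W"
  have Vn: "\<forall>i<0. V i = zf" unfolding V_def VLp_def by auto
  have V0: "V 0 p \<noteq> 0" for p unfolding V_def VLp_def by (subst vLp.simps) (simp add: W0)
  have caV: "CA V" unfolding CA_def V_def VLp_def using vLp_Alg[OF ca W0] Alg_const by auto
  have VW: "V ** W = lam 0" unfolding V_def by (rule VLp_left[OF W0 Wn])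
  define U where "U = VLp V"
  have Un: "\<forall>i<0. U i = zf" unfolding U_def VLp_def by auto
  have UV: "U ** V = lam 0" unfolding U_def by (rule VLp_left[OF V0 Vn])
  have "U = U ** (V ** W)" by (simp add: VW lam_right)
  also have "\<dots> = (U ** V) ** W" by (rule assoc_L[symmetric]) (use LB0 Un Vn Wn in auto)
  also have "\<dots> = W" by (simp add: UV lam_left)
  finally have UW: "U = W" .
  have WV: "W ** V = lam 0" using UV UW by simp
  have "inv_pos W = V"
    unfolding inv_pos_def
  proof (rule the_equality)
    show "(\<forall>i<0. V i = zf) \<and> W ** V = lam 0 \<and> V ** W = lam 0" using Vn WV VW by simp
  next
    fix V' assume V': "(\<forall>i<0. V' i = (\<lambda>_. 0)) \<and> W ** V' = lam 0 \<and> V' ** W = lam 0"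
    have "V' = V' ** (W ** V)" by (simp add: WV lam_right)
    also have "\<dots> = (V' ** W) ** V" by (rule assoc_L[symmetric]) (use LB0 V' Vn Wn in auto)
    also have "\<dots> = V" using V' by (simp add: lam_left)
    finally show "V' = V" .
  qed
  then show ?thesis using Vn WV VW caV by simp
qed



lemma conj_gen:
  assumes assoc: "\<And>A B C. P A \<Longrightarrow> P B \<Longrightarrow> P C \<Longrightarrow> (A ** B) ** C = A ** (B ** C)"
    and cl: "\<And>A B. P A \<Longrightarrow> P B \<Longrightarrow> P (A ** B)" and pl: "\<And>n. P (lam n)"
    and W: "P W" and V: "P V" and VW: "V ** W = lam 0"
  shows "((W ** lam a) ** V) ** ((W ** lam b) ** V) = W ** (lam (a + b) ** V)"
proof -
  have "((W ** lam a) ** V) ** ((W ** lam b) ** V) = (W ** lam a) ** (V ** ((W ** lam b) ** V))"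
    by (intro assoc cl W V pl)
  also have "V ** ((W ** lam b) ** V) = (V ** (W ** lam b)) ** V" by (intro assoc[symmetric] cl W V pl)
  also have "V ** (W ** lam b) = lam b" using assoc[OF V W pl, of b] VW by (simp add: lam_left)
  also have "(W ** lam a) ** (lam b ** V) = W ** (lam a ** (lam b ** V))" by (intro assoc cl W V pl)
  also have "lam a ** (lam b ** V) = lam (a + b) ** V" using assoc[OF pl pl V, of a b] by (simp add: lam_mult)
  finally show ?thesis .
qed

lemma dpd_lam: "dpd v (lam a) = Zop"
  unfolding dpd_def lam_def Zop_def using pd_const by (auto intro!: ext)

lemma dadd_Zop: "dadd A Zop = A" unfolding dadd_def Zop_def by simp

lemma logpart_gen:
  assumes assoc: "\<And>A B C. P A \<Longrightarrow> P B \<Longrightarrow> P C \<Longrightarrow> (A ** B) ** C = A ** (B ** C)"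
    and fs: "\<And>A B. P A \<Longrightarrow> P B \<Longrightarrow> FS A B"
    and cl: "\<And>A B. P A \<Longrightarrow> P B \<Longrightarrow> P (A ** B)" and pl: "\<And>n. P (lam n)"
    and pd: "\<And>A. P A \<Longrightarrow> P (dpd S A)" and ps: "\<And>A c. P A \<Longrightarrow> P (dsmul c A)"
    and W: "P W" and V: "P V" and VW: "V ** W = lam 0" and WV: "W ** V = lam 0"
    and cW: "CA W" and cV: "CA V"
  shows "((W ** dpd S V) ** ((W ** lam a) ** V)) i p
        = ((W ** lam a) ** V ** (W ** dpd S V)) i p - dpd S ((W ** lam a) ** V) i p"
proof -
  define W' where "W' = dpd S W"
  define V' where "V' = dpd S V"
  have W': "P W'" and V': "P V'" unfolding W'_def V'_def using pd W V by auto
  have cWl: "CA (W ** lam a)" by (intro CA_dmul fs W pl cW CA_lam)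
  have "dpd S (V ** W) = dadd (V' ** W) (V ** W')"
    unfolding V'_def W'_def by (rule dpd_dmul) (intro fs V W cV cW)+
  then have "dadd (V' ** W) (V ** W') = Zop" using VW dpd_lam by simp
  then have E1: "V' ** W = dsmul (-1) (V ** W')"
    unfolding dadd_def dsmul_def Zop_def by (auto simp: fun_eq_iff eq_neg_iff_add_eq_0)
  have "(W ** V') ** ((W ** lam a) ** V) = W ** (V' ** ((W ** lam a) ** V))"
    by (intro assoc cl W V V' pl)
  also have "V' ** ((W ** lam a) ** V) = (V' ** (W ** lam a)) ** V"
    by (intro assoc[symmetric] cl W V V' pl)
  also have "V' ** (W ** lam a) = (V' ** W) ** lam a"
    by (intro assoc[symmetric] cl W V V' pl)
  also have "(V' ** W) ** lam a = dsmul (-1) ((V ** W') ** lam a)"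
    unfolding E1 by (intro dmul_dsmul_left fs cl V W' pl)
  also have "dsmul (-1) ((V ** W') ** lam a) ** V = dsmul (-1) (((V ** W') ** lam a) ** V)"
    by (intro dmul_dsmul_left fs cl V W' pl)
  also have "W ** dsmul (-1) (((V ** W') ** lam a) ** V) = dsmul (-1) (W ** (((V ** W') ** lam a) ** V))"
    by (intro dmul_dsmul_right fs cl V W' W pl)
  also have "((V ** W') ** lam a) ** V = V ** ((W' ** lam a) ** V)"
    using assoc[OF V W' pl] assoc[OF V cl[OF W' pl] V] by simp
  also have "W ** (V ** ((W' ** lam a) ** V)) = (W' ** lam a) ** V"
    using assoc[OF W V cl[OF cl[OF W' pl] V]] WV by (simp add: lam_left)
  finally have LP: "(W ** V') ** ((W ** lam a) ** V) = dsmul (-1) ((W' ** lam a) ** V)" .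
  have "((W ** lam a) ** V) ** (W ** V') = (W ** lam a) ** (V ** (W ** V'))"
    by (intro assoc cl W V V' pl)
  also have "V ** (W ** V') = V'"
    using assoc[OF V W V'] VW by (simp add: lam_left)
  finally have PL: "((W ** lam a) ** V) ** (W ** V') = (W ** lam a) ** V'" .
  have "dpd S ((W ** lam a) ** V) = dadd (dpd S (W ** lam a) ** V) ((W ** lam a) ** V')"
    unfolding V'_def by (rule dpd_dmul) (intro fs cl W V pl cWl cV)+
  also have "dpd S (W ** lam a) = dadd (W' ** lam a) (W ** dpd S (lam a))"
    unfolding W'_def by (rule dpd_dmul) (intro fs W pl cW CA_lam)+
  also have "dadd (W' ** lam a) (W ** dpd S (lam a)) = W' ** lam a"
    unfolding dpd_lam dmul_Zop_right dadd_Zop ..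
  finally have DL: "dpd S ((W ** lam a) ** V) = dadd ((W' ** lam a) ** V) ((W ** lam a) ** V')" .
  show ?thesis unfolding V'_def[symmetric] LP PL DL by (simp add: dadd_def dsmul_def)
qed



abbreviation sfn :: fn where "sfn \<equiv> (\<lambda>q. complex_of_real (q S))"

lemma pd_s: "v \<noteq> S \<Longrightarrow> pd v sfn = zf"
proof (rule HD_pd)
  assume v: "v \<noteq> S"
  show "HD v sfn zf" unfolding HD_def using v by simp
qed

lemma pdpow_s: "v \<noteq> S \<Longrightarrow> (pd v ^^ n) sfn = (if n = 0 then sfn else zf)"
proof (induction n)
  case (Suc n)
  then show ?case using pd_s[OF Suc.prems] pd_const[of v 0] by (cases n) auto
qed simp

lemma dmi_s: "(\<And>i. v i \<noteq> S) \<Longrightarrow> dmi v m j sfn = (if \<forall>i\<in>{1..j}. m i = 0 then sfn else zf)"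
proof (induction j)
  case 0
  then show ?case by simp
next
  case (Suc j)
  have e: "(\<forall>i\<in>{1..Suc j}. m i = 0) \<longleftrightarrow> (\<forall>i\<in>{1..j}. m i = 0) \<and> m (Suc j) = 0"
    by (auto simp: le_Suc_eq)
  show ?case unfolding dmi.simps Suc.IH[OF Suc.prems] e
    using pdpow_s[OF Suc.prems, of "m (Suc j)"] pdpow_zero[where w="v (Suc j)" and n="m (Suc j)"] by auto
qed

lemma MI_nz: "1 \<le> j \<Longrightarrow> m \<in> MI j \<Longrightarrow> \<exists>i\<in>{1..j}. m i \<noteq> 0"
proof (rule ccontr)
  assume j: "1 \<le> j" and m: "m \<in> MI j" and c: "\<not> (\<exists>i\<in>{1..j}. m i \<noteq> 0)"
  have "(\<Sum>i=1..j. i * m i) = 0" using c by simp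
  then show False using m j unfolding MI_def by simp
qed

lemma Gc_s: "Gc j sfn = (if j = 0 then sfn else zf)"
proof (cases "j = 0")
  case True
  then show ?thesis unfolding True Gc_def MI_0 by simp
next
  case False
  have "dmi T m j sfn = zf" if "m \<in> MI j" for m
    using dmi_s[of T m j] MI_nz[of j m] that False by auto
  then show ?thesis unfolding Gc_def using False by simp
qed

lemma Gbc_s: "Gbc j sfn = (if j = 0 then (\<lambda>p. complex_of_real (p S) + 1) else zf)"
proof (cases "j = 0")
  case True
  then show ?thesis unfolding True Gbc_def MI_0 by simp
next
  case False
  have "dmi Tb m j sfn = zf" if "m \<in> MI j" for m
    using dmi_s[of Tb m j] MI_nz[of j m] that False by auto
  then show ?thesis unfolding Gbc_def using False by simp
qed

lemma ASvM_lam0: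
  assumes t: "\<tau> \<in> Alg" and nz: "\<And>p. \<tau> p \<noteq> 0"
  shows "ASvM k \<tau> (lam 0) (\<lambda>q. complex_of_real (q S) * \<tau> q)"
  unfolding ASvM_def
proof (intro conjI allI)
  have h: "(\<lambda>q. complex_of_real (q S) * \<tau> q / \<tau> q) = sfn" using nz by auto
  show "lam 0 ** Lax k \<tau> = Lax k \<tau> ** lam 0" by (simp add: lam_left lam_right)
  fix j
  have dm: "dminus (lam 0) ** Wop \<tau> = (\<lambda>i. zf)"
    by (intro ext dmul_empty) (auto simp: dminus_def lam_def)
  have "sdiv (\<lambda>j p. - (dminus (lam 0) ** Wop \<tau>) (- int j) p) (\<lambda>j. Wop \<tau> (- int j)) = (\<lambda>j. zf)"
    unfolding dm
  proof (rule sdiv_eq)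
    fix p show "Wop \<tau> (- int 0) p \<noteq> 0" unfolding Wop_j Gc_GG[OF t] using nz by simp
  qed simp
  then show "sdiv (\<lambda>j p. - (dminus (lam 0) ** Wop \<tau>) (- int j) p) (\<lambda>j. Wop \<tau> (- int j)) j =
         (\<lambda>p. Gc j (\<lambda>q. complex_of_real (q S) * \<tau> q / \<tau> q) p - (if j = 0 then complex_of_real (p S) * \<tau> p / \<tau> p else 0))"
    unfolding h Gc_s using nz by auto
  have dp: "dplus (lam 0) ** Wbop \<tau> = Wbop \<tau>"
  proof -
    have "dplus (lam 0) = lam 0" by (auto simp: dplus_def lam_def fun_eq_iff)
    then show ?thesis by (simp add: lam_left)
  qed
  have "sdiv (\<lambda>j. (dplus (lam 0) ** Wbop \<tau>) (int j)) (\<lambda>j. Wbop \<tau> (int j)) = (\<lambda>j p. if j = 0 then 1 else 0)"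
    unfolding dp
  proof (rule sdiv_eq)
    fix p show "Wbop \<tau> (int 0) p \<noteq> 0" unfolding Wbop_j Gbc_GG[OF t] using nz by simp
  next
    fix j p
    have "(\<Sum>i\<le>j. (if i = 0 then 1 else 0) * Wbop \<tau> (int (j - i)) p) = (\<Sum>i\<le>j. if i = 0 then Wbop \<tau> (int (j - i)) p else 0)"
      by (intro sum.cong) auto
    also have "\<dots> = Wbop \<tau> (int j) p" by (subst sum.delta) auto
    finally show "Wbop \<tau> (int j) p = (\<Sum>i\<le>j. (if i = 0 then 1 else 0) * Wbop \<tau> (int (j - i)) p)" by simp
  qed
  then show "sdiv (\<lambda>j. (dplus (lam 0) ** Wbop \<tau>) (int j)) (\<lambda>j. Wbop \<tau> (int j)) j =
         (\<lambda>p. Gbc j (\<lambda>q. complex_of_real (q S) * \<tau> q / \<tau> q) p - (if j = 0 then complex_of_real (p S) * \<tau> p / \<tau> p else 0))"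
    unfolding h Gbc_s using nz by auto
qed

lemma ASvM_flow:
  assumes t: "\<tau> \<in> Alg" and nz: "\<And>p. \<tau> p \<noteq> 0" and comm: "a ** Lax k \<tau> = Lax k \<tau> ** a"
    and f1: "dpd v (Wop \<tau>) = dsmul (-1) (dminus a ** Wop \<tau>)"
    and f2: "dpd v (Wbop \<tau>) = dplus a ** Wbop \<tau>"
  shows "ASvM k \<tau> a (pd v \<tau>)"
  unfolding ASvM_def
proof (intro conjI allI comm)
  fix j
  have n1: "(\<lambda>j p. - (dminus a ** Wop \<tau>) (- int j) p) = (\<lambda>j p. pd v (Wop \<tau> (- int j)) p)"
  proof (intro ext)
    fix j p
    show "- (dminus a ** Wop \<tau>) (- int j) p = pd v (Wop \<tau> (- int j)) p"
      using fun_cong[OF fun_cong[OF f1, of "- int j"], of p] unfolding dpd_def dsmul_def by simp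
  qed
  show "sdiv (\<lambda>j p. - (dminus a ** Wop \<tau>) (- int j) p) (\<lambda>j. Wop \<tau> (- int j)) j =
        (\<lambda>p. Gc j (\<lambda>q. pd v \<tau> q / \<tau> q) p - (if j = 0 then pd v \<tau> p / \<tau> p else 0))"
    unfolding n1 ASvM_W[OF t nz] ..
  have n2: "(\<lambda>j. (dplus a ** Wbop \<tau>) (int j)) = (\<lambda>j p. pd v (Wbop \<tau> (int j)) p)"
  proof (intro ext)
    fix j p
    show "(dplus a ** Wbop \<tau>) (int j) p = pd v (Wbop \<tau> (int j)) p"
      using fun_cong[OF fun_cong[OF f2, of "int j"], of p] unfolding dpd_def by simp
  qed
  show "sdiv (\<lambda>j. (dplus a ** Wbop \<tau>) (int j)) (\<lambda>j. Wbop \<tau> (int j)) j =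
        (\<lambda>p. Gbc j (\<lambda>q. pd v \<tau> q / \<tau> q) p - (if j = 0 then pd v \<tau> p / \<tau> p else 0))"
    unfolding n2 ASvM_Wb[OF t nz] ..
qed

theorem lemma4p2:
  fixes k m :: nat and \<tau> :: fn
  assumes "k \<ge> 1" and "m \<ge> 1"
    and "tau_fn k m \<tau>"
  shows "(\<forall>n\<ge>1. ASvM k \<tau> (Lk \<tau> (int n)) (pd (T n) \<tau>)) \<and>
         (\<forall>n\<ge>1. ASvM k \<tau> (Lm \<tau> (int n)) (pd (Tb n) \<tau>)) \<and>
         (\<forall>p. ASvM k \<tau> (dsmul 2 (dpow (Lax k \<tau>) p ** logL \<tau>)) (pd (xv p) \<tau>)) \<and>
         ASvM k \<tau> (lam 0) (\<lambda>q. complex_of_real (q S) * \<tau> q)"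
proof -
  note tf = assms(3)[unfolded tau_fn_def]
  have sm: "smooth_fn \<tau>" using tf by blast
  have nz: "\<And>p. \<tau> p \<noteq> 0" using tf by blast
  have LmLax: "Lax k \<tau> = Lm \<tau> (int m)" using tf by blast
  have band: "\<forall>i. (i > int k \<or> i < - int m) \<longrightarrow> Lax k \<tau> i = zf" using tf by blast
  have fT: "\<forall>n\<ge>1. dpd (T n) (Wop \<tau>) = dsmul (-1) (dminus (Lk \<tau> (int n)) ** Wop \<tau>) \<and>
             dpd (T n) (Wbop \<tau>) = dplus (Lk \<tau> (int n)) ** Wbop \<tau>" using tf by blast
  have fTb: "\<forall>n\<ge>1. dpd (Tb n) (Wop \<tau>) = dsmul (-1) (dminus (Lm \<tau> (int n)) ** Wop \<tau>) \<and>
             dpd (Tb n) (Wbop \<tau>) = dplus (Lm \<tau> (int n)) ** Wbop \<tau>" using tf by blast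
  have fX: "\<forall>n. dpd (xv n) (Wop \<tau>) =
              dsmul (-1) (dminus (dsmul 2 (dpow (Lax k \<tau>) n ** logL \<tau>)) ** Wop \<tau>) \<and>
           dpd (xv n) (Wbop \<tau>) =
              dplus (dsmul 2 (dpow (Lax k \<tau>) n ** logL \<tau>)) ** Wbop \<tau>" using tf by blast
  have t: "\<tau> \<in> Alg" using sm Alg_smooth_iff by blast
  have it: "(\<lambda>p. inverse (\<tau> p)) \<in> Alg" using sm nz by (intro Alg_inv) auto
  define W where "W = Wop \<tau>"
  define Wb where "Wb = Wbop \<tau>"
  define V where "V = inv_neg W"
  define Vb where "Vb = inv_pos Wb"
  define L where "L = Lax k \<tau>"
  have W0: "W 0 = (\<lambda>_. 1)" unfolding W_def Wop_def using nz by (auto simp: Gc_GG[OF t])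
  have Wp: "\<forall>i>0. W i = zf" unfolding W_def Wop_def by auto
  have cW: "CA W" unfolding CA_def
  proof
    fix i
    show "W i \<in> Alg"
    proof (cases "i \<le> 0")
      case True
      have "W i = (\<lambda>p. GG aT T (nat (- i)) \<tau> p * inverse (\<tau> p))"
        unfolding W_def Wop_def using True by (simp add: Gc_GG[OF t] divide_inverse)
      also have "\<dots> \<in> Alg" by (intro Alg_mult GG_Alg t it)
      finally show ?thesis .
    next
      case False then show ?thesis unfolding W_def Wop_def using Alg_const[of 0] by simp
    qed
  qed
  have Wb0: "\<And>p. Wb 0 p \<noteq> 0" unfolding Wb_def Wbop_def using nz by (simp add: Gbc_GG[OF t])
  have Wbn: "\<forall>i<0. Wb i = zf" unfolding Wb_def Wbop_def by auto
  have cWb: "CA Wb" unfolding CA_def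
  proof
    fix i
    show "Wb i \<in> Alg"
    proof (cases "i \<ge> 0")
      case True
      have "Wb i = (\<lambda>p. GG aB Tb (nat i) \<tau> (shiftp 1 p) * inverse (\<tau> p))"
        unfolding Wb_def Wbop_def using True by (simp add: Gbc_GG[OF t] divide_inverse)
      also have "\<dots> \<in> Alg" by (intro Alg_mult Alg_shift GG_Alg t it)
      finally show ?thesis .
    next
      case False then show ?thesis unfolding Wb_def Wbop_def using Alg_const[of 0] by simp
    qed
  qed
  have IN: "(\<forall>i>0. V i = zf) \<and> W ** V = lam 0 \<and> V ** W = lam 0 \<and> CA V"
    unfolding V_def by (rule inv_neg_props[OF W0 Wp cW])
  have IP: "(\<forall>i<0. Vb i = zf) \<and> Wb ** Vb = lam 0 \<and> Vb ** Wb = lam 0 \<and> CA Vb"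
    unfolding Vb_def by (rule inv_pos_props[OF Wb0 Wbn cWb])
  have UW: "UB W" and UV: "UB V" using UB0 Wp IN by auto
  have LW: "LB Wb" and LV: "LB Vb" using LB0 Wbn IP by auto
  have Lk_eq: "Lk \<tau> n = (W ** lam n) ** V" for n unfolding Lk_def W_def V_def ..
  have Lm_eq: "Lm \<tau> n = (Wb ** lam (- n)) ** Vb" for n unfolding Lm_def Wb_def Vb_def ..
  have LL: "L = (W ** lam (int k)) ** V" unfolding L_def Lax_def Lk_eq ..
  have LLb: "L = (Wb ** lam (- int m)) ** Vb" unfolding L_def LmLax Lm_eq ..
  have conjU: "((W ** lam a) ** V) ** ((W ** lam b) ** V) = W ** (lam (a + b) ** V)" for a b
    by (rule conj_gen[where P=UB, OF assoc_U UB_mult UB_lam UW UV]) (use IN in auto)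
  have conjL: "((Wb ** lam a) ** Vb) ** ((Wb ** lam b) ** Vb) = Wb ** (lam (a + b) ** Vb)" for a b
    by (rule conj_gen[where P=LB, OF assoc_L LB_mult LB_lam LW LV]) (use IP in auto)
  have cLk: "Lk \<tau> n ** L = L ** Lk \<tau> n" for n
    unfolding LL Lk_eq conjU by (simp add: add.commute)
  have cLm: "Lm \<tau> n ** L = L ** Lm \<tau> n" for n
    unfolding LLb Lm_eq conjL by (simp add: add.commute)
  have BDL: "BD L" unfolding BD_def UB_def LB_def L_def using band by blast
  define P1 where "P1 = W ** dpd S V"
  define P2 where "P2 = Wb ** dpd S Vb"
  have e1: "(P1 ** L) i p = (L ** P1) i p - dpd S L i p" for i p
    unfolding P1_def LL
    by (rule logpart_gen[where P=UB, OF assoc_U FS_U UB_mult UB_lam UB_dpd UB_dsmul UW UV])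
       (use IN cW in auto)
  have e2: "(P2 ** L) i p = (L ** P2) i p - dpd S L i p" for i p
    unfolding P2_def LLb
    by (rule logpart_gen[where P=LB, OF assoc_L FS_L LB_mult LB_lam LB_dpd LB_dsmul LW LV])
       (use IP cWb in auto)
  have lg: "logL \<tau> = dadd (dsmul (1/2) P1) (dsmul (- 1/2) P2)"
    unfolding logL_def P1_def P2_def W_def V_def Wb_def Vb_def ..
  have fsR: "FS X L" for X by (rule FS_BB[OF BDL])
  have fsL: "FS L X" for X by (rule FS_BA[OF BDL])
  have clog: "logL \<tau> ** L = L ** logL \<tau>"
  proof -
    have 1: "logL \<tau> ** L = dadd (dsmul (1/2) (P1 ** L)) (dsmul (- 1/2) (P2 ** L))"
      unfolding lg by (simp add: dmul_dadd_left fsR dmul_dsmul_left)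
    have 2: "L ** logL \<tau> = dadd (dsmul (1/2) (L ** P1)) (dsmul (- 1/2) (L ** P2))"
      unfolding lg by (simp add: dmul_dadd_right fsL dmul_dsmul_right)
    show ?thesis unfolding 1 2
      by (intro ext) (simp add: dadd_def dsmul_def e1 e2 algebra_simps)
  qed
  have dpS: "dpow L (Suc n) = L ** dpow L n" for n unfolding dpow_def by simp
  have BDP: "BD (dpow L n)" for n
    by (induction n) (simp_all add: dpS BD_mult BDL, simp add: dpow_def BD_lam)
  have cpow: "dpow L n ** L = L ** dpow L n" for n
  proof (induction n)
    case 0 then show ?case by (simp add: dpow_def lam_left lam_right)
  next
    case (Suc n)
    have "dpow L (Suc n) ** L = L ** (dpow L n ** L)" unfolding dpS by (rule assoc_AC[OF BDL BDL])
    also have "\<dots> = L ** dpow L (Suc n)" unfolding Suc dpS ..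
    finally show ?case .
  qed
  have cX: "dsmul 2 (dpow L n ** logL \<tau>) ** L = L ** dsmul 2 (dpow L n ** logL \<tau>)" for n
  proof -
    have "(dpow L n ** logL \<tau>) ** L = dpow L n ** (logL \<tau> ** L)" by (rule assoc_AC[OF BDP BDL])
    also have "\<dots> = dpow L n ** (L ** logL \<tau>)" unfolding clog ..
    also have "\<dots> = (dpow L n ** L) ** logL \<tau>" by (rule assoc_AB[OF BDP BDL, symmetric])
    also have "\<dots> = (L ** dpow L n) ** logL \<tau>" unfolding cpow ..
    also have "\<dots> = L ** (dpow L n ** logL \<tau>)" by (rule assoc_AB[OF BDL BDP])
    finally show ?thesis by (simp add: dmul_dsmul_left fsR dmul_dsmul_right fsL)
  qed
  show ?thesis
  proof (intro conjI allI impI)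
    fix n :: nat assume "n \<ge> 1"
    then show "ASvM k \<tau> (Lk \<tau> (int n)) (pd (T n) \<tau>)"
      using fT cLk unfolding L_def by (intro ASvM_flow t nz) auto
  next
    fix n :: nat assume "n \<ge> 1"
    then show "ASvM k \<tau> (Lm \<tau> (int n)) (pd (Tb n) \<tau>)"
      using fTb cLm unfolding L_def by (intro ASvM_flow t nz) auto
  next
    fix p
    show "ASvM k \<tau> (dsmul 2 (dpow (Lax k \<tau>) p ** logL \<tau>)) (pd (xv p) \<tau>)"
      using fX cX unfolding L_def by (intro ASvM_flow t nz) auto
  next
    show "ASvM k \<tau> (lam 0) (\<lambda>q. complex_of_real (q S) * \<tau> q)" by (rule ASvM_lam0[OF t nz])
  qed
qed


end
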